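(* Let $\mathcal A\subseteq B(\mathcal H)$ be a unital w*-closed algebra and $(\mathcal A,\{\alpha_i\}_{i\in[d]})$ a w*-dynamical system such that each $\alpha_i$ is implemented by an invertible row operator $u_i=[u_{i,j}]_{j\in[n_i]}$ (with inverse $[v_{i,j}]^t$), i.e. $\alpha_i(a)=\sum_ju_{i,j}av_{i,j}$. Then the w*-closed linear spans $\overline{\operatorname{span}}^{w*}\{V_{\mathbf w}\rho(y):\mathbf w\in\mathbb F_+^N,y\in\mathcal A'\}$ and $\overline{\operatorname{span}}^{w*}\{W_{\mathbf w}\rho(y):\mathbf w\in\mathbb F_+^N,y\in\mathcal A'\}$ coincide with the w*-closed algebras generated by $\{V_{\mathbf w}\rho(y):\mathbf w\in\mathbb F_+^N,y\in\mathcal A'\}$ and by $\{W_{\mathbf w}\rho(y):\mathbf w\in\mathbb F_+^N,y\in\mathcal A'\}$, respectively.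
   Context: $d\in\{1,2,\dots\}\cup\{\infty\}$, $[d]=\{1,\dots,d\}$, $\mathbb F_+^d$ free semigroup on $[d]$, $\bar\nu$ the reverse word; on $\ell^2(\mathbb F_+^d)$, $\mathfrak l_ie_w=e_{iw}$ and $\mathfrak r_ie_w=e_{wi}$; on $\mathcal H\otimes\ell^2(\mathbb F_+^d)$, $\rho(x)=x\otimes I$. A row $u_i=[u_{i,j}]_{j\in[n_i]}$ is invertible if there is a bounded column $[v_{i,j}]^t$ with $v_{i,j}u_{i,k}=\delta_{jk}I$ and $\sum_ju_{i,j}v_{i,j}=I$. A w*-dynamical system: the $\alpha_i$ are unital w*-continuous completely bounded endomorphisms of $\mathcal A$ with $\sup_\mu\|\alpha_\mu\|<\infty$. $\mathbb F_+^N$ denotes the free semigroup on generators $(i,j)$, $i\in[d]$, $j\in[n_i]$, with unit $\varnothing$. $V_{(i,j)}=u_{i,j}\otimes\mathfrak l_i$, $W_{(i,j)}=u_{i,j}\otimes\mathfrak r_i$, and for $\mathbf w=\mathbf w_k\cdots\mathbf w_1\in\mathbb F_+^N$, $V_{\mathbf w}=V_{\mathbf w_k}\cdots V_{\mathbf w_1}$, $W_{\mathbf w}=W_{\mathbf w_k}\cdots W_{\mathbf w_1}$ ($=I$ for $\varnothing$). These spans are denoted $\mathcal A'\times_u\mathcal L_d$ and $\mathcal A'\times_u\mathcal R_d$. *)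

theory Defs
  imports "HOL-Analysis.Analysis" "HOL-Library.Extended_Nat"
begin

type_synonym 'a vec = "'a \<Rightarrow> complex"
type_synonym ('a, 'b) op = "'a vec \<Rightarrow> 'b vec"

definition ell2 :: "'a set \<Rightarrow> 'a vec set" where
  "ell2 A = {f. (\<forall>x. x \<notin> A \<longrightarrow> f x = 0) \<and> (\<lambda>x. (cmod (f x))^2) summable_on UNIV}"

definition ip :: "'a vec \<Rightarrow> 'a vec \<Rightarrow> complex" where
  "ip f g = infsum (\<lambda>x. cnj (f x) * g x) UNIV"

definition norm2 :: "'a vec \<Rightarrow> real" where
  "norm2 f = sqrt (infsum (\<lambda>x. (cmod (f x))^2) UNIV)"

(* bounded linear operators l^2(A) -> l^2(B); normalised to be 0 off l^2(A) *)
definition bop :: "'a set \<Rightarrow> 'b set \<Rightarrow> ('a,'b) op \<Rightarrow> bool" where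
  "bop A B T \<longleftrightarrow>
     (\<forall>f \<in> ell2 A. T f \<in> ell2 B) \<and>
     (\<forall>f \<in> ell2 A. \<forall>g \<in> ell2 A. T (\<lambda>x. f x + g x) = (\<lambda>y. T f y + T g y)) \<and>
     (\<forall>f \<in> ell2 A. \<forall>c. T (\<lambda>x. c * f x) = (\<lambda>y. c * T f y)) \<and>
     (\<exists>C. \<forall>f \<in> ell2 A. norm2 (T f) \<le> C * norm2 f) \<and>
     (\<forall>f. f \<notin> ell2 A \<longrightarrow> T f = (\<lambda>_. 0))"

definition Bop :: "'a set \<Rightarrow> ('a,'a) op set" where
  "Bop A = {T. bop A A T}"

definition idop :: "'a set \<Rightarrow> ('a,'a) op" where
  "idop A = (\<lambda>f. if f \<in> ell2 A then f else (\<lambda>_. 0))"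

definition ozero :: "('a,'b) op" where
  "ozero = (\<lambda>f x. 0)"

definition oadd :: "('a,'b) op \<Rightarrow> ('a,'b) op \<Rightarrow> ('a,'b) op" where
  "oadd S T = (\<lambda>f x. S f x + T f x)"

definition oscale :: "complex \<Rightarrow> ('a,'b) op \<Rightarrow> ('a,'b) op" where
  "oscale c T = (\<lambda>f x. c * T f x)"

definition opnorm :: "'a set \<Rightarrow> ('a,'b) op \<Rightarrow> real" where
  "opnorm A T = Sup {norm2 (T f) | f. f \<in> ell2 A \<and> norm2 f \<le> 1}"

definition normal_pair :: "'a set \<Rightarrow> (nat \<Rightarrow> 'a vec) \<Rightarrow> (nat \<Rightarrow> 'a vec) \<Rightarrow> bool" where
  "normal_pair A \<xi> \<eta> \<longleftrightarrow> (\<forall>k. \<xi> k \<in> ell2 A \<and> \<eta> k \<in> ell2 A) \<and>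
     summable (\<lambda>k. (norm2 (\<xi> k))^2) \<and> summable (\<lambda>k. (norm2 (\<eta> k))^2)"

definition nfun :: "(nat \<Rightarrow> 'a vec) \<Rightarrow> (nat \<Rightarrow> 'a vec) \<Rightarrow> ('a,'a) op \<Rightarrow> complex" where
  "nfun \<xi> \<eta> T = (\<Sum>k. ip (\<xi> k) (T (\<eta> k)))"

definition wstar :: "'a set \<Rightarrow> ('a,'a) op topology" where
  "wstar A = topology_generated_by
     {{T \<in> Bop A. nfun \<xi> \<eta> T \<in> U} | \<xi> \<eta> U. open U \<and> normal_pair A \<xi> \<eta>}"

definition subalg :: "'a set \<Rightarrow> ('a,'a) op set \<Rightarrow> bool" where
  "subalg A S \<longleftrightarrow> S \<subseteq> Bop A \<and> ozero \<in> S \<and>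
     (\<forall>a\<in>S. \<forall>b\<in>S. oadd a b \<in> S \<and> a \<circ> b \<in> S) \<and> (\<forall>c. \<forall>a\<in>S. oscale c a \<in> S)"

definition unital_wstar_alg :: "'a set \<Rightarrow> ('a,'a) op set \<Rightarrow> bool" where
  "unital_wstar_alg A S \<longleftrightarrow> subalg A S \<and> idop A \<in> S \<and> closedin (wstar A) S"

definition commutant :: "'a set \<Rightarrow> ('a,'a) op set \<Rightarrow> ('a,'a) op set" where
  "commutant A S = {y \<in> Bop A. \<forall>a\<in>S. y \<circ> a = a \<circ> y}"

inductive_set ospan :: "('a,'b) op set \<Rightarrow> ('a,'b) op set" for G where
  ospan_zero: "ozero \<in> ospan G"
| ospan_step: "S \<in> ospan G \<Longrightarrow> T \<in> G \<Longrightarrow> oadd (oscale c T) S \<in> ospan G"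

definition wspan :: "'a set \<Rightarrow> ('a,'a) op set \<Rightarrow> ('a,'a) op set" where
  "wspan A G = wstar A closure_of ospan G"

definition walg :: "'a set \<Rightarrow> ('a,'a) op set \<Rightarrow> ('a,'a) op set" where
  "walg A G = \<Inter> {S. G \<subseteq> S \<and> subalg A S \<and> closedin (wstar A) S}"

(* [d] = {1,...,d}, or {1,2,...} when d = infinity *)
definition idx :: "enat \<Rightarrow> nat set" where
  "idx d = {i. 1 \<le> i \<and> enat i \<le> d}"

(* F_+^d : words over [d]; the word w_1 ... w_k is the list [w_1,...,w_k] *)
definition words :: "enat \<Rightarrow> nat list set" where
  "words d = lists (idx d)"

definition Nwords :: "enat \<Rightarrow> (nat \<Rightarrow> enat) \<Rightarrow> (nat \<times> nat) list set" where
  "Nwords d n = lists {(i,j). i \<in> idx d \<and> j \<in> idx (n i)}"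

(* j-th coordinate embedding H -> H^(n) = l^2(X x [n]) *)
definition inj :: "nat \<Rightarrow> ('x, 'x \<times> nat) op" where
  "inj j = (\<lambda>g. if g \<in> ell2 UNIV then (\<lambda>(x,k). if k = j then g x else 0) else (\<lambda>_. 0))"

(* u_{i,j} = U_i o inj_j, where U_i : H^(n_i) -> H is the row [u_{i,j}]_j *)
definition entry :: "(nat \<Rightarrow> ('x \<times> nat, 'x) op) \<Rightarrow> nat \<Rightarrow> nat \<Rightarrow> ('x,'x) op" where
  "entry U i j = U i \<circ> inj j"

(* a (x) I_J on l^2(X x J) *)
definition amp :: "nat set \<Rightarrow> ('x,'x) op \<Rightarrow> ('x \<times> nat, 'x \<times> nat) op" where
  "amp J a = (\<lambda>f. if f \<in> ell2 (UNIV \<times> J)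
      then (\<lambda>(x,j). if j \<in> J then a (\<lambda>x'. f (x',j)) x else 0) else (\<lambda>_. 0))"

(* alpha_i(a) = sum_j u_{i,j} a v_{i,j} = U_i (a (x) I) V_i *)
definition alpha :: "(nat \<Rightarrow> enat) \<Rightarrow> (nat \<Rightarrow> ('x \<times> nat, 'x) op) \<Rightarrow> (nat \<Rightarrow> ('x, 'x \<times> nat) op)
    \<Rightarrow> nat \<Rightarrow> ('x,'x) op \<Rightarrow> ('x,'x) op" where
  "alpha n U V i a = U i \<circ> amp (idx (n i)) a \<circ> V i"

definition alpha_word :: "(nat \<Rightarrow> enat) \<Rightarrow> (nat \<Rightarrow> ('x \<times> nat, 'x) op) \<Rightarrow> (nat \<Rightarrow> ('x, 'x \<times> nat) op)
    \<Rightarrow> nat list \<Rightarrow> ('x,'x) op \<Rightarrow> ('x,'x) op" where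
  "alpha_word n U V \<mu> = foldr (\<lambda>i g. alpha n U V i \<circ> g) \<mu> id"

definition matop :: "nat \<Rightarrow> (nat \<Rightarrow> nat \<Rightarrow> ('x,'x) op) \<Rightarrow> ('x \<times> nat, 'x \<times> nat) op" where
  "matop m M = (\<lambda>f. if f \<in> ell2 (UNIV \<times> {..<m})
      then (\<lambda>(x,k). if k < m then (\<Sum>l<m. M k l (\<lambda>x'. f (x',l)) x) else 0) else (\<lambda>_. 0))"

definition unital_endo :: "('x,'x) op set \<Rightarrow> (('x,'x) op \<Rightarrow> ('x,'x) op) \<Rightarrow> bool" where
  "unital_endo S \<phi> \<longleftrightarrow> (\<forall>a\<in>S. \<phi> a \<in> S) \<and>
     (\<forall>a\<in>S. \<forall>b\<in>S. \<phi> (oadd a b) = oadd (\<phi> a) (\<phi> b) \<and> \<phi> (a \<circ> b) = \<phi> a \<circ> \<phi> b) \<and>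
     (\<forall>c. \<forall>a\<in>S. \<phi> (oscale c a) = oscale c (\<phi> a)) \<and>
     \<phi> (idop UNIV) = idop UNIV"

definition wstar_continuous :: "('x,'x) op set \<Rightarrow> (('x,'x) op \<Rightarrow> ('x,'x) op) \<Rightarrow> bool" where
  "wstar_continuous S \<phi> \<longleftrightarrow>
     continuous_map (subtopology (wstar UNIV) S) (subtopology (wstar UNIV) S) \<phi>"

definition completely_bounded :: "('x,'x) op set \<Rightarrow> (('x,'x) op \<Rightarrow> ('x,'x) op) \<Rightarrow> bool" where
  "completely_bounded S \<phi> \<longleftrightarrow> (\<exists>C. \<forall>m M. (\<forall>k<m. \<forall>l<m. M k l \<in> S) \<longrightarrow>
      opnorm (UNIV \<times> {..<m}) (matop m (\<lambda>k l. \<phi> (M k l)))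
        \<le> C * opnorm (UNIV \<times> {..<m}) (matop m M))"

(* u (x) l_i,  l_i e_w = e_{iw} *)
definition tensl :: "enat \<Rightarrow> nat \<Rightarrow> ('x,'x) op \<Rightarrow> ('x \<times> nat list, 'x \<times> nat list) op" where
  "tensl d i u = (\<lambda>f. if f \<in> ell2 (UNIV \<times> words d)
      then (\<lambda>(x,w'). case w' of [] \<Rightarrow> 0 | k # w \<Rightarrow> if k = i then u (\<lambda>x'. f (x',w)) x else 0)
      else (\<lambda>_. 0))"

(* u (x) r_i,  r_i e_w = e_{wi} *)
definition tensr :: "enat \<Rightarrow> nat \<Rightarrow> ('x,'x) op \<Rightarrow> ('x \<times> nat list, 'x \<times> nat list) op" where
  "tensr d i u = (\<lambda>f. if f \<in> ell2 (UNIV \<times> words d)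
      then (\<lambda>(x,w'). if w' \<noteq> [] \<and> last w' = i then u (\<lambda>x'. f (x', butlast w')) x else 0)
      else (\<lambda>_. 0))"

(* rho(y) = y (x) I *)
definition rho :: "enat \<Rightarrow> ('x,'x) op \<Rightarrow> ('x \<times> nat list, 'x \<times> nat list) op" where
  "rho d y = (\<lambda>f. if f \<in> ell2 (UNIV \<times> words d)
      then (\<lambda>(x,w). y (\<lambda>x'. f (x',w)) x) else (\<lambda>_. 0))"

(* V_w = V_{w_k} ... V_{w_1} for w = w_k ... w_1 (list [w_k,...,w_1]); V_{(i,j)} = u_{i,j} (x) l_i *)
definition Vw :: "enat \<Rightarrow> (nat \<Rightarrow> ('x \<times> nat, 'x) op) \<Rightarrow> (nat \<times> nat) list
    \<Rightarrow> ('x \<times> nat list, 'x \<times> nat list) op" where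
  "Vw d U ws = foldr (\<lambda>(i,j) T. tensl d i (entry U i j) \<circ> T) ws (idop (UNIV \<times> words d))"

(* W_w = W_{w_k} ... W_{w_1}; W_{(i,j)} = u_{i,j} (x) r_i *)
definition Ww :: "enat \<Rightarrow> (nat \<Rightarrow> ('x \<times> nat, 'x) op) \<Rightarrow> (nat \<times> nat) list
    \<Rightarrow> ('x \<times> nat list, 'x \<times> nat list) op" where
  "Ww d U ws = foldr (\<lambda>(i,j) T. tensr d i (entry U i j) \<circ> T) ws (idop (UNIV \<times> words d))"

end

theory Submission
  imports Defs
begin

lemma ell2_sum: "f \<in> ell2 A \<Longrightarrow> (\<lambda>x. (cmod (f x))^2) summable_on UNIV"
  by (simp add: ell2_def)

lemma ell2_out: "f \<in> ell2 A \<Longrightarrow> x \<notin> A \<Longrightarrow> f x = 0"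
  by (simp add: ell2_def)

lemma ell2I: "(\<And>x. x \<notin> A \<Longrightarrow> f x = 0) \<Longrightarrow> (\<lambda>x. (cmod (f x))^2) summable_on UNIV \<Longrightarrow> f \<in> ell2 A"
  by (simp add: ell2_def)

lemma ell2_zero[simp]: "(\<lambda>_. 0) \<in> ell2 A"
  by (simp add: ell2_def)

lemma sq_add_le: "(cmod (a + b))^2 \<le> 2 * (cmod a)^2 + 2 * (cmod b)^2"
proof -
  have "cmod (a+b) \<le> cmod a + cmod b" by (rule norm_triangle_ineq)
  hence "(cmod (a+b))^2 \<le> (cmod a + cmod b)^2" by (simp add: power_mono)
  also have "\<dots> \<le> 2 * (cmod a)^2 + 2 * (cmod b)^2"
  proof -
    have "(cmod a + cmod b)^2 = (cmod a)^2 + 2*cmod a*cmod b + (cmod b)^2" by (simp add: power2_sum)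
    with sum_squares_bound[of "cmod a" "cmod b"] show ?thesis by linarith
  qed
  finally show ?thesis .
qed

lemma ell2_add: "f \<in> ell2 A \<Longrightarrow> g \<in> ell2 A \<Longrightarrow> (\<lambda>x. f x + g x) \<in> ell2 A"
proof (rule ell2I)
  assume f: "f \<in> ell2 A" and g: "g \<in> ell2 A"
  show "x \<notin> A \<Longrightarrow> f x + g x = 0" for x using f g by (simp add: ell2_out)
  have "(\<lambda>x. 2 * (cmod (f x))^2 + 2 * (cmod (g x))^2) summable_on UNIV"
    using f g by (intro summable_on_add summable_on_cmult_right ell2_sum)
  then show "(\<lambda>x. (cmod (f x + g x))^2) summable_on UNIV"
    by (rule summable_on_comparison_test) (auto simp: sq_add_le)
qed

lemma ell2_scale: "f \<in> ell2 A \<Longrightarrow> (\<lambda>x. c * f x) \<in> ell2 A"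
proof (rule ell2I)
  assume f: "f \<in> ell2 A"
  show "x \<notin> A \<Longrightarrow> c * f x = 0" for x using f by (simp add: ell2_out)
  have "(\<lambda>x. (cmod c)^2 * (cmod (f x))^2) summable_on UNIV"
    using f by (intro summable_on_cmult_right ell2_sum)
  then show "(\<lambda>x. (cmod (c * f x))^2) summable_on UNIV"
    by (simp add: norm_mult power_mult_distrib)
qed

lemma ell2_minus: "f \<in> ell2 A \<Longrightarrow> g \<in> ell2 A \<Longrightarrow> (\<lambda>x. f x - g x) \<in> ell2 A"
  using ell2_add[of f A "\<lambda>x. (-1) * g x"] ell2_scale[of g A "-1"] by simp

lemma ell2_mono: "g \<in> ell2 A \<Longrightarrow> (\<And>x. cmod (f x) \<le> cmod (g x)) \<Longrightarrow> (\<And>x. x \<notin> A \<Longrightarrow> f x = 0) \<Longrightarrow> f \<in> ell2 A"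
  apply (rule ell2I, simp)
  apply (rule summable_on_comparison_test[OF ell2_sum], assumption)
   apply (rule power_mono, assumption, simp)
  by simp

lemma ell2_subset: "f \<in> ell2 A \<Longrightarrow> A \<subseteq> B \<Longrightarrow> f \<in> ell2 B"
  by (auto simp: ell2_def)

lemma norm2_sq: "f \<in> ell2 A \<Longrightarrow> (norm2 f)^2 = infsum (\<lambda>x. (cmod (f x))^2) UNIV"
  unfolding norm2_def by (simp add: infsum_nonneg)

lemma norm2_nonneg[simp]: "norm2 f \<ge> 0"
  unfolding norm2_def by (auto intro!: infsum_nonneg)

lemma norm2_zero[simp]: "norm2 (\<lambda>_. 0) = 0"
  by (simp add: norm2_def)

lemma prod_le: "cmod a * cmod b \<le> (1/2) * ((cmod a)^2 + (cmod b)^2)"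
proof -
  have "2 * (cmod a * cmod b) \<le> (cmod a)^2 + (cmod b)^2"
    using sum_squares_bound[of "cmod a" "cmod b"] by (simp add: mult.assoc)
  thus ?thesis by (simp add: field_simps)
qed

lemma ip_abs_summable: "f \<in> ell2 A \<Longrightarrow> g \<in> ell2 B \<Longrightarrow> (\<lambda>x. cmod (f x) * cmod (g x)) summable_on UNIV"
proof -
  assume f: "f \<in> ell2 A" and g: "g \<in> ell2 B"
  have "(\<lambda>x. (1/2) * ((cmod (f x))^2 + (cmod (g x))^2)) summable_on UNIV"
    using f g by (intro summable_on_cmult_right summable_on_add ell2_sum)
  then show ?thesis by (rule summable_on_comparison_test) (rule prod_le, simp)
qed

lemma ip_summable: "f \<in> ell2 A \<Longrightarrow> g \<in> ell2 B \<Longrightarrow> (\<lambda>x. cnj (f x) * g x) summable_on UNIV"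
  apply (subst summable_on_iff_abs_summable_on_complex)
  using ip_abs_summable[of f A g B] by (simp add: norm_mult)

lemma integrable_count_space_iff_summable:
  fixes h :: "'a \<Rightarrow> complex"
  shows "integrable (count_space UNIV) h \<longleftrightarrow> (\<lambda>x. cmod (h x)) summable_on UNIV"
  using abs_summable_equivalent[of h UNIV] unfolding abs_summable_on_def by simp

lemma infsum_as_integral:
  fixes h :: "'a \<Rightarrow> complex"
  assumes "(\<lambda>x. cmod (h x)) summable_on UNIV"
  shows "infsum h UNIV = integral\<^sup>L (count_space UNIV) h"
  using infsetsum_infsum[of h UNIV] assms abs_summable_equivalent[of h UNIV]
  unfolding infsetsum_def by simp

lemma infsum_dominated:
  fixes f :: "nat \<Rightarrow> 'a \<Rightarrow> complex" and g :: "'a \<Rightarrow> complex" and h :: "'a \<Rightarrow> real"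
  assumes h: "h summable_on UNIV" and bnd: "\<And>m x. cmod (f m x) \<le> h x"
    and lim: "\<And>x. (\<lambda>m. f m x) \<longlonglongrightarrow> g x"
  shows "(\<lambda>m. infsum (f m) UNIV) \<longlonglongrightarrow> infsum g UNIV"
proof -
  have hn: "\<And>x. h x \<ge> 0" using bnd[of 0] norm_ge_zero order_trans by blast
  have hs: "(\<lambda>x. cmod (complex_of_real (h x))) summable_on UNIV" using h hn by simp
  have hs': "(\<lambda>x. norm (h x)) summable_on UNIV" using h hn by simp
  have hi: "integrable (count_space UNIV) (\<lambda>x. h x)"
    using abs_summable_equivalent[of h UNIV] hs' unfolding abs_summable_on_def by simp
  have A: "integrable M g \<and> (\<forall>i. integrable M (f i)) \<and> ((\<lambda>i. integral\<^sup>L M (f i)) \<longlonglongrightarrow> integral\<^sup>L M g)"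
    if M: "M = count_space UNIV" for M
    using integrable_dominated_convergence[of g M f h] integrable_dominated_convergence2[of g M f h]
      integral_dominated_convergence[of g M f h] hi lim bnd M by auto
  have sg: "(\<lambda>x. cmod (g x)) summable_on UNIV"
    using A[OF refl] integrable_count_space_iff_summable by blast
  have sf: "\<And>m. (\<lambda>x. cmod (f m x)) summable_on UNIV"
    using A[OF refl] integrable_count_space_iff_summable by blast
  show ?thesis
    using A[OF refl] by (simp add: infsum_as_integral[OF sg] infsum_as_integral[OF sf])
qed

lemma ip_add_right: "f \<in> ell2 A \<Longrightarrow> g \<in> ell2 B \<Longrightarrow> h \<in> ell2 B \<Longrightarrow>
    ip f (\<lambda>x. g x + h x) = ip f g + ip f h"
  unfolding ip_def using ip_summable[of f A g B] ip_summable[of f A h B]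
  by (simp add: distrib_left infsum_add)

lemma ip_scale_right: "ip f (\<lambda>x. c * g x) = c * ip f g"
  unfolding ip_def by (simp add: infsum_cmult_right' mult.left_commute)

lemma ip_add_left: "f \<in> ell2 A \<Longrightarrow> g \<in> ell2 A \<Longrightarrow> h \<in> ell2 B \<Longrightarrow>
    ip (\<lambda>x. f x + g x) h = ip f h + ip g h"
  unfolding ip_def using ip_summable[of f A h B] ip_summable[of g A h B]
  by (simp add: distrib_right infsum_add)

lemma ip_scale_left: "ip (\<lambda>x. c * f x) g = cnj c * ip f g"
  unfolding ip_def by (simp add: infsum_cmult_right' mult.assoc)

lemma ip_zero_right[simp]: "ip f (\<lambda>_. 0) = 0"
  by (simp add: ip_def)

lemma ip_zero_left[simp]: "ip (\<lambda>_. 0) f = 0"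
  by (simp add: ip_def)

lemma ip_norm_le: "f \<in> ell2 A \<Longrightarrow> g \<in> ell2 B \<Longrightarrow>
    cmod (ip f g) \<le> infsum (\<lambda>x. cmod (f x) * cmod (g x)) UNIV"
  unfolding ip_def
  apply (rule order_trans[OF norm_infsum_bound])
  using ip_abs_summable[of f A g B] by (auto simp: norm_mult)

lemma ip_bound: "f \<in> ell2 A \<Longrightarrow> g \<in> ell2 B \<Longrightarrow>
    cmod (ip f g) \<le> (1/2) * ((norm2 f)^2 + (norm2 g)^2)"
proof -
  assume f: "f \<in> ell2 A" and g: "g \<in> ell2 B"
  have "cmod (ip f g) \<le> infsum (\<lambda>x. cmod (f x) * cmod (g x)) UNIV" by (rule ip_norm_le[OF f g])
  also have "\<dots> \<le> infsum (\<lambda>x. (1/2) * ((cmod (f x))^2 + (cmod (g x))^2)) UNIV"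
    apply (rule infsum_mono[OF ip_abs_summable[OF f g]])
     apply (intro summable_on_cmult_right summable_on_add ell2_sum[OF f] ell2_sum[OF g])
    by (rule prod_le)
  also have "\<dots> = (1/2) * (infsum (\<lambda>x. (cmod (f x))^2) UNIV + infsum (\<lambda>x. (cmod (g x))^2) UNIV)"
    by (simp only: infsum_cmult_right' infsum_add[OF ell2_sum[OF f] ell2_sum[OF g]])
  also have "\<dots> = (1/2) * ((norm2 f)^2 + (norm2 g)^2)"
    by (simp add: norm2_sq[OF f] norm2_sq[OF g])
  finally show ?thesis .
qed

lemma norm2_scale: "norm2 (\<lambda>x. c * f x) = cmod c * norm2 f"
  unfolding norm2_def
  by (simp add: norm_mult power_mult_distrib infsum_cmult_right' real_sqrt_mult)

lemma norm2_eq_0: "f \<in> ell2 A \<Longrightarrow> norm2 f = 0 \<Longrightarrow> f x = 0"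
proof -
  assume f: "f \<in> ell2 A" and z: "norm2 f = 0"
  have "infsum (\<lambda>x. (cmod (f x))^2) UNIV = 0" using norm2_sq[OF f] z by simp
  hence "(cmod (f x))^2 = 0"
    by (intro nonneg_infsum_le_0D[OF _ ell2_sum[OF f]]) auto
  thus ?thesis by simp
qed

lemma cauchy_schwarz: "f \<in> ell2 A \<Longrightarrow> g \<in> ell2 B \<Longrightarrow> cmod (ip f g) \<le> norm2 f * norm2 g"
proof -
  assume f: "f \<in> ell2 A" and g: "g \<in> ell2 B"
  show ?thesis
  proof (cases "norm2 f = 0 \<or> norm2 g = 0")
    case True
    then show ?thesis
    proof
      assume "norm2 f = 0"
      hence "f = (\<lambda>_. 0)" using norm2_eq_0[OF f] by auto
      thus ?thesis by simp
    next
      assume "norm2 g = 0"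
      hence "g = (\<lambda>_. 0)" using norm2_eq_0[OF g] by auto
      thus ?thesis by simp
    qed
  next
    case False
    define a where "a = norm2 f"
    define b where "b = norm2 g"
    have a: "a > 0" and b: "b > 0" using False norm2_nonneg a_def b_def by (auto simp: less_le)
    define t where "t = sqrt (b / a)"
    have t: "t > 0" using a b by (simp add: t_def)
    have t2: "t^2 = b / a" using a b by (simp add: t_def)
    have e: "ip (\<lambda>x. complex_of_real t * f x) (\<lambda>x. complex_of_real (1/t) * g x)
       = cnj (complex_of_real t) * (complex_of_real (1/t) * ip f g)"
      by (simp only: ip_scale_left ip_scale_right)
    have "ip f g = ip (\<lambda>x. complex_of_real t * f x) (\<lambda>x. complex_of_real (1/t) * g x)"
      unfolding e using t by simp
    also have "cmod \<dots> \<le> (1/2) * ((norm2 (\<lambda>x. complex_of_real t * f x))^2 + (norm2 (\<lambda>x. complex_of_real (1/t) * g x))^2)"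
      by (rule ip_bound[OF ell2_scale[OF f] ell2_scale[OF g]])
    also have "\<dots> = (1/2) * (t^2 * a^2 + b^2 / t^2)"
      using t by (simp only: norm2_scale, simp add: a_def b_def power_mult_distrib power_divide norm_divide)
    also have "\<dots> = a * b"
      using a b t t2 by (simp add: field_simps power2_eq_square)
    finally show ?thesis by (simp add: a_def b_def)
  qed
qed

lemma bopD1: "bop A B T \<Longrightarrow> f \<in> ell2 A \<Longrightarrow> T f \<in> ell2 B" by (simp add: bop_def)
lemma bopD_add: "bop A B T \<Longrightarrow> f \<in> ell2 A \<Longrightarrow> g \<in> ell2 A \<Longrightarrow> T (\<lambda>x. f x + g x) = (\<lambda>y. T f y + T g y)"
  by (simp add: bop_def)
lemma bopD_scale: "bop A B T \<Longrightarrow> f \<in> ell2 A \<Longrightarrow> T (\<lambda>x. c * f x) = (\<lambda>y. c * T f y)"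
  by (simp add: bop_def)
lemma bopD_off: "bop A B T \<Longrightarrow> f \<notin> ell2 A \<Longrightarrow> T f = (\<lambda>_. 0)"
  by (simp add: bop_def)

lemma bop_bound: assumes "bop A B T" obtains C where "C \<ge> 0" "\<And>f. f \<in> ell2 A \<Longrightarrow> norm2 (T f) \<le> C * norm2 f"
proof -
  obtain C where C: "\<forall>f \<in> ell2 A. norm2 (T f) \<le> C * norm2 f" using assms by (auto simp: bop_def)
  show ?thesis
  proof (rule that[of "max C 0"])
    show "\<And>f. f \<in> ell2 A \<Longrightarrow> norm2 (T f) \<le> max C 0 * norm2 f"
      using C by (meson max.cobounded1 mult_right_mono norm2_nonneg order_trans)
  qed simp
qed

lemma bop_zero: "bop A B T \<Longrightarrow> T (\<lambda>_. 0) = (\<lambda>_. 0)"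
  using bopD_scale[of A B T "\<lambda>_. 0" 0] by simp

lemma bop_ell2: "bop A B T \<Longrightarrow> T f \<in> ell2 B"
  by (cases "f \<in> ell2 A") (auto simp: bopD1 bopD_off)

lemma bop_diff: "bop A B T \<Longrightarrow> f \<in> ell2 A \<Longrightarrow> g \<in> ell2 A \<Longrightarrow> T (\<lambda>x. f x - g x) = (\<lambda>y. T f y - T g y)"
proof -
  assume T: "bop A B T" and f: "f \<in> ell2 A" and g: "g \<in> ell2 A"
  have "T (\<lambda>x. f x + (-1) * g x) = (\<lambda>y. T f y + T (\<lambda>x. (-1) * g x) y)"
    by (rule bopD_add[OF T f ell2_scale[OF g]])
  thus ?thesis using bopD_scale[OF T g, of "-1"] by simp
qed

lemma norm2_add_le: assumes f: "f \<in> ell2 A" and g: "g \<in> ell2 A"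
  shows "norm2 (\<lambda>x. f x + g x) \<le> 2 * (norm2 f + norm2 g)"
proof -
  have "(norm2 (\<lambda>x. f x + g x))^2 = infsum (\<lambda>x. (cmod (f x + g x))^2) UNIV"
    by (rule norm2_sq[OF ell2_add[OF f g]])
  also have "\<dots> \<le> infsum (\<lambda>x. 2 * (cmod (f x))^2 + 2 * (cmod (g x))^2) UNIV"
    apply (rule infsum_mono[OF ell2_sum[OF ell2_add[OF f g]]])
    apply (intro summable_on_add summable_on_cmult_right ell2_sum[OF f] ell2_sum[OF g])
    by (rule sq_add_le)
  also have "\<dots> = 2 * (norm2 f)^2 + 2 * (norm2 g)^2"
    by (simp only: infsum_add summable_on_cmult_right ell2_sum[OF f] ell2_sum[OF g] infsum_cmult_right'
        norm2_sq[OF f] norm2_sq[OF g])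
  also have "\<dots> \<le> (2 * (norm2 f + norm2 g))^2"
    by (simp add: power2_eq_square algebra_simps)
  finally show ?thesis
    by (rule power2_le_imp_le) simp
qed

lemma bop_comp: "bop A B S \<Longrightarrow> bop B C T \<Longrightarrow> bop A C (T \<circ> S)"
proof -
  assume S: "bop A B S" and T: "bop B C T"
  obtain c1 where c1: "c1 \<ge> 0" "\<And>f. f \<in> ell2 A \<Longrightarrow> norm2 (S f) \<le> c1 * norm2 f" using bop_bound[OF S] by blast
  obtain c2 where c2: "c2 \<ge> 0" "\<And>f. f \<in> ell2 B \<Longrightarrow> norm2 (T f) \<le> c2 * norm2 f" using bop_bound[OF T] by blast
  show ?thesis unfolding bop_def
  proof (intro conjI ballI allI impI)
    fix f assume f: "f \<in> ell2 A"
    show "(T \<circ> S) f \<in> ell2 C" using f by (simp add: bopD1[OF T] bopD1[OF S])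
    show "\<And>c. (T \<circ> S) (\<lambda>x. c * f x) = (\<lambda>y. c * (T \<circ> S) f y)"
      using f by (simp add: bopD_scale[OF S] bopD_scale[OF T] bopD1[OF S])
    fix g assume g: "g \<in> ell2 A"
    show "(T \<circ> S) (\<lambda>x. f x + g x) = (\<lambda>y. (T \<circ> S) f y + (T \<circ> S) g y)"
      using f g by (simp add: bopD_add[OF S] bopD_add[OF T] bopD1[OF S])
  next
    show "\<exists>K. \<forall>f\<in>ell2 A. norm2 ((T \<circ> S) f) \<le> K * norm2 f"
    proof (intro exI ballI)
      fix f assume f: "f \<in> ell2 A"
      have "norm2 (T (S f)) \<le> c2 * norm2 (S f)" using c2 bopD1[OF S f] by blast
      also have "\<dots> \<le> c2 * (c1 * norm2 f)" using c1 c2 f by (simp add: mult_left_mono)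
      finally show "norm2 ((T \<circ> S) f) \<le> (c2 * c1) * norm2 f" by (simp add: mult.assoc)
    qed
  next
    fix f assume "f \<notin> ell2 A"
    thus "(T \<circ> S) f = (\<lambda>_. 0)" by (simp add: bopD_off[OF S] bop_zero[OF T])
  qed
qed

lemma bop_idop: "bop A A (idop A)"
  unfolding bop_def idop_def
  by (auto simp: ell2_add ell2_scale intro!: exI[of _ 1])

lemma idop_comp: "bop X A T \<Longrightarrow> idop A \<circ> T = T"
  by (rule ext) (simp add: idop_def bop_ell2)

lemma comp_idop: "bop A X T \<Longrightarrow> T \<circ> idop A = T"
  by (rule ext) (simp add: idop_def bopD_off bop_zero)

lemma bop_ozero: "bop A B ozero"
  unfolding bop_def ozero_def by (auto intro!: exI[of _ 0])

lemma bop_oadd: "bop A B S \<Longrightarrow> bop A B T \<Longrightarrow> bop A B (oadd S T)"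
proof -
  assume S: "bop A B S" and T: "bop A B T"
  obtain c1 where c1: "c1 \<ge> 0" "\<And>f. f \<in> ell2 A \<Longrightarrow> norm2 (S f) \<le> c1 * norm2 f" using bop_bound[OF S] by blast
  obtain c2 where c2: "c2 \<ge> 0" "\<And>f. f \<in> ell2 A \<Longrightarrow> norm2 (T f) \<le> c2 * norm2 f" using bop_bound[OF T] by blast
  show ?thesis unfolding bop_def oadd_def
  proof (intro conjI ballI allI impI)
    fix f assume f: "f \<in> ell2 A"
    show "(\<lambda>x. S f x + T f x) \<in> ell2 B" using f by (simp add: ell2_add bopD1[OF S] bopD1[OF T])
    show "\<And>c. (\<lambda>x. S (\<lambda>x. c * f x) x + T (\<lambda>x. c * f x) x) = (\<lambda>y. c * (S f y + T f y))"
      using f by (simp add: bopD_scale[OF S] bopD_scale[OF T] distrib_left)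
    fix g assume g: "g \<in> ell2 A"
    show "(\<lambda>x. S (\<lambda>x. f x + g x) x + T (\<lambda>x. f x + g x) x) = (\<lambda>y. S f y + T f y + (S g y + T g y))"
      using f g by (simp add: bopD_add[OF S] bopD_add[OF T] algebra_simps)
  next
    show "\<exists>K. \<forall>f\<in>ell2 A. norm2 (\<lambda>x. S f x + T f x) \<le> K * norm2 f"
    proof (intro exI ballI)
      fix f assume f: "f \<in> ell2 A"
      have "norm2 (\<lambda>x. S f x + T f x) \<le> 2 * (norm2 (S f) + norm2 (T f))"
        by (rule norm2_add_le[OF bopD1[OF S f] bopD1[OF T f]])
      also have "\<dots> \<le> 2 * (c1 * norm2 f + c2 * norm2 f)" using c1 c2 f by (intro mult_left_mono add_mono) auto
      finally show "norm2 (\<lambda>x. S f x + T f x) \<le> (2 * (c1 + c2)) * norm2 f" by (simp add: algebra_simps)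
    qed
  next
    fix f assume "f \<notin> ell2 A"
    thus "(\<lambda>x. S f x + T f x) = (\<lambda>_. 0)" by (simp add: bopD_off[OF S] bopD_off[OF T])
  qed
qed

lemma bop_oscale: "bop A B T \<Longrightarrow> bop A B (oscale c T)"
proof -
  assume T: "bop A B T"
  obtain c2 where c2: "c2 \<ge> 0" "\<And>f. f \<in> ell2 A \<Longrightarrow> norm2 (T f) \<le> c2 * norm2 f" using bop_bound[OF T] by blast
  show ?thesis unfolding bop_def oscale_def
  proof (intro conjI ballI allI impI)
    fix f assume f: "f \<in> ell2 A"
    show "(\<lambda>x. c * T f x) \<in> ell2 B" using f by (simp add: ell2_scale bopD1[OF T])
    show "\<And>d. (\<lambda>x. c * T (\<lambda>x. d * f x) x) = (\<lambda>y. d * (c * T f y))"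
      using f by (simp add: bopD_scale[OF T] algebra_simps)
    fix g assume g: "g \<in> ell2 A"
    show "(\<lambda>x. c * T (\<lambda>x. f x + g x) x) = (\<lambda>y. c * T f y + c * T g y)"
      using f g by (simp add: bopD_add[OF T] algebra_simps)
  next
    show "\<exists>K. \<forall>f\<in>ell2 A. norm2 (\<lambda>x. c * T f x) \<le> K * norm2 f"
    proof (intro exI ballI)
      fix f assume f: "f \<in> ell2 A"
      have "norm2 (\<lambda>x. c * T f x) = cmod c * norm2 (T f)" by (rule norm2_scale)
      also have "\<dots> \<le> cmod c * (c2 * norm2 f)" using c2 f by (intro mult_left_mono) auto
      finally show "norm2 (\<lambda>x. c * T f x) \<le> (cmod c * c2) * norm2 f" by (simp add: algebra_simps)
    qed
  next
    fix f assume "f \<notin> ell2 A"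
    thus "(\<lambda>x. c * T f x) = (\<lambda>_. 0)" by (simp add: bopD_off[OF T])
  qed
qed

lemma comp_oadd_right: "bop A B R \<Longrightarrow> bop C A S \<Longrightarrow> bop C A T \<Longrightarrow> R \<circ> oadd S T = oadd (R \<circ> S) (R \<circ> T)"
  by (rule ext) (simp add: oadd_def bopD_add bop_ell2)

lemma comp_oscale_right: "bop A B R \<Longrightarrow> bop C A S \<Longrightarrow> R \<circ> oscale c S = oscale c (R \<circ> S)"
  by (rule ext) (simp add: oscale_def bopD_scale bop_ell2)

lemma oadd_comp: "oadd S T \<circ> R = oadd (S \<circ> R) (T \<circ> R)"
  by (rule ext) (simp add: oadd_def)

lemma oscale_comp: "oscale c S \<circ> R = oscale c (S \<circ> R)"
  by (rule ext) (simp add: oscale_def)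

lemma ozero_comp: "ozero \<circ> R = ozero"
  by (rule ext) (simp add: ozero_def)

lemma comp_ozero: "bop A B R \<Longrightarrow> R \<circ> ozero = ozero"
  by (rule ext) (simp add: ozero_def bop_zero[unfolded ozero_def])

definition delta :: "'a \<Rightarrow> 'a vec" where "delta x = (\<lambda>y. if y = x then 1 else 0)"
definition trunc :: "'a set \<Rightarrow> 'a vec \<Rightarrow> 'a vec" where "trunc F c = (\<lambda>y. if y \<in> F then c y else 0)"

lemma finite_support_summable:
  fixes g :: "'a \<Rightarrow> 'b::{comm_monoid_add,topological_space}"
  shows "finite F \<Longrightarrow> (\<And>x. x \<notin> F \<Longrightarrow> g x = 0) \<Longrightarrow> g summable_on UNIV"
  using summable_on_cong_neutral[of UNIV F g g] by auto

lemma finite_support_infsum: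
  fixes g :: "'a \<Rightarrow> 'b::{comm_monoid_add,t2_space}"
  shows "finite F \<Longrightarrow> (\<And>x. x \<notin> F \<Longrightarrow> g x = 0) \<Longrightarrow> infsum g UNIV = sum g F"
  using infsum_cong_neutral[of UNIV F g g] by auto

lemma trunc_ell2: "finite F \<Longrightarrow> F \<subseteq> A \<Longrightarrow> trunc F c \<in> ell2 A"
  by (rule ell2I) (auto simp: trunc_def intro!: finite_support_summable)

lemma delta_ell2: "x \<in> A \<Longrightarrow> delta x \<in> ell2 A"
  using trunc_ell2[of "{x}" A "\<lambda>_. 1"] by (simp add: trunc_def delta_def)

lemma norm2_trunc: "finite F \<Longrightarrow> (norm2 (trunc F c))^2 = (\<Sum>x\<in>F. (cmod (c x))^2)"
proof -
  assume F: "finite F"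
  have "(norm2 (trunc F c))^2 = infsum (\<lambda>x. (cmod (trunc F c x))^2) UNIV"
    by (rule norm2_sq[OF trunc_ell2[OF F subset_refl]])
  also have "\<dots> = (\<Sum>x\<in>F. (cmod (trunc F c x))^2)"
    by (rule finite_support_infsum[OF F]) (simp add: trunc_def)
  finally show ?thesis by (simp add: trunc_def)
qed

lemma ell2_finsum: "finite F \<Longrightarrow> (\<And>x. x \<in> F \<Longrightarrow> g x \<in> ell2 B) \<Longrightarrow> (\<lambda>z. \<Sum>x\<in>F. c x * g x z) \<in> ell2 B"
proof (induction F rule: finite_induct)
  case empty
  then show ?case by simp
next
  case (insert a F)
  then show ?case by (simp add: ell2_add ell2_scale)
qed

lemma bop_trunc: assumes T: "bop A B T" shows "finite F \<Longrightarrow> F \<subseteq> A \<Longrightarrow>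
    T (trunc F c) = (\<lambda>z. \<Sum>x\<in>F. c x * T (delta x) z)"
proof (induction F rule: finite_induct)
  case empty
  then show ?case using bop_zero[OF T] by (simp add: trunc_def)
next
  case (insert a F)
  have e: "trunc (insert a F) c = (\<lambda>y. c a * delta a y + trunc F c y)"
    using insert by (auto simp: trunc_def delta_def)
  have "T (trunc (insert a F) c) = (\<lambda>z. T (\<lambda>y. c a * delta a y) z + T (trunc F c) z)"
    unfolding e using insert by (intro bopD_add[OF T] ell2_scale delta_ell2 trunc_ell2) auto
  also have "\<dots> = (\<lambda>z. c a * T (delta a) z + T (trunc F c) z)"
    using insert by (simp add: bopD_scale[OF T] delta_ell2)
  finally show ?case using insert by simp
qed

lemma ip_finsum_right: assumes f: "f \<in> ell2 A" shows "finite F \<Longrightarrow> (\<And>x. x \<in> F \<Longrightarrow> g x \<in> ell2 B) \<Longrightarrow>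
   ip f (\<lambda>z. \<Sum>x\<in>F. c x * g x z) = (\<Sum>x\<in>F. c x * ip f (g x))"
proof (induction F rule: finite_induct)
  case empty
  then show ?case by simp
next
  case (insert a F)
  have "ip f (\<lambda>z. \<Sum>x\<in>insert a F. c x * g x z) = ip f (\<lambda>z. c a * g a z + (\<Sum>x\<in>F. c x * g x z))"
    using insert by simp
  also have "\<dots> = ip f (\<lambda>z. c a * g a z) + ip f (\<lambda>z. \<Sum>x\<in>F. c x * g x z)"
    using insert f by (intro ip_add_right[of f A _ B]) (auto intro!: ell2_scale ell2_finsum)
  finally show ?case using insert by (simp add: ip_scale_right)
qed

lemma ip_cnj: "ip g f = cnj (ip f g)"
  unfolding ip_def by (subst infsum_cnj[symmetric]) (simp add: mult.commute)

definition adjop :: "'a set \<Rightarrow> 'b set \<Rightarrow> ('a,'b) op \<Rightarrow> ('b,'a) op" where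
  "adjop A B T = (\<lambda>\<xi>. if \<xi> \<in> ell2 B then (\<lambda>x. if x \<in> A then ip (T (delta x)) \<xi> else 0) else (\<lambda>_. 0))"

lemma adj_partial_bound:
  assumes T: "bop A B T" and C: "C \<ge> 0" "\<And>f. f \<in> ell2 A \<Longrightarrow> norm2 (T f) \<le> C * norm2 f"
    and xi: "\<xi> \<in> ell2 B" and F: "finite F" "F \<subseteq> A"
  shows "(\<Sum>x\<in>F. (cmod (adjop A B T \<xi> x))^2) \<le> (C * norm2 \<xi>)^2"
proof -
  define c where "c = adjop A B T \<xi>"
  define S where "S = (\<Sum>x\<in>F. (cmod (c x))^2)"
  have S0: "S \<ge> 0" by (simp add: S_def sum_nonneg)
  have "ip \<xi> (T (trunc F c)) = (\<Sum>x\<in>F. c x * ip \<xi> (T (delta x)))"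
    unfolding bop_trunc[OF T F]
    by (rule ip_finsum_right[OF xi F(1)]) (use F in \<open>auto intro: bopD1[OF T] delta_ell2\<close>)
  also have "\<dots> = (\<Sum>x\<in>F. c x * cnj (c x))"
    using F xi by (intro sum.cong) (auto simp: c_def adjop_def ip_cnj[of \<xi>])
  also have "\<dots> = complex_of_real S"
    by (simp only: S_def of_real_sum complex_norm_square)
  finally have e: "ip \<xi> (T (trunc F c)) = complex_of_real S" .
  have n: "norm2 (trunc F c) = sqrt S"
    using norm2_trunc[OF F(1), of c] by (simp add: S_def real_sqrt_unique)
  have "S = cmod (ip \<xi> (T (trunc F c)))" using e S0 by simp
  also have "\<dots> \<le> norm2 \<xi> * norm2 (T (trunc F c))"
    by (rule cauchy_schwarz[OF xi bopD1[OF T trunc_ell2[OF F]]])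
  also have "\<dots> \<le> norm2 \<xi> * (C * sqrt S)"
    unfolding n[symmetric] by (intro mult_left_mono C(2) trunc_ell2[OF F]) simp
  finally have Sle: "S \<le> C * norm2 \<xi> * sqrt S" by (simp only: ac_simps)
  have "S \<le> (C * norm2 \<xi>)^2"
  proof (cases "S = 0")
    case True then show ?thesis by simp
  next
    case False
    hence "sqrt S > 0" using S0 by simp
    moreover have "sqrt S * sqrt S \<le> C * norm2 \<xi> * sqrt S" using Sle S0 by simp
    ultimately have "sqrt S \<le> C * norm2 \<xi>" by (meson mult_right_le_imp_le)
    hence "(sqrt S)^2 \<le> (C * norm2 \<xi>)^2" by (rule power_mono) (simp add: S0)
    thus ?thesis using S0 by simp
  qed
  thus ?thesis by (simp add: S_def c_def)
qed

lemma adj_ell2: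
  assumes T: "bop A B T" and C: "C \<ge> 0" "\<And>f. f \<in> ell2 A \<Longrightarrow> norm2 (T f) \<le> C * norm2 f"
    and xi: "\<xi> \<in> ell2 B"
  shows "adjop A B T \<xi> \<in> ell2 A" "norm2 (adjop A B T \<xi>) \<le> C * norm2 \<xi>"
proof -
  define g where "g x = (cmod (adjop A B T \<xi> x))^2" for x
  have g0: "\<And>x. x \<notin> A \<Longrightarrow> g x = 0" by (simp add: g_def adjop_def)
  have bnd: "sum g F \<le> (C * norm2 \<xi>)^2" if F: "finite F" for F
  proof -
    have "sum g F = sum g (F \<inter> A)"
      using F g0 by (intro sum.mono_neutral_right) auto
    also have "\<dots> \<le> (C * norm2 \<xi>)^2"
      unfolding g_def by (rule adj_partial_bound[OF T C xi]) (use F in auto)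
    finally show ?thesis .
  qed
  have gs: "g summable_on UNIV"
    apply (rule nonneg_bdd_above_summable_on)
     apply (simp add: g_def)
    unfolding bdd_above_def using bnd by blast
  show ell: "adjop A B T \<xi> \<in> ell2 A"
    apply (rule ell2I)
     apply (simp add: adjop_def)
    using gs by (simp add: g_def[abs_def])
  have "infsum g UNIV \<le> (C * norm2 \<xi>)^2"
    by (rule infsum_le_finite_sums[OF gs]) (rule bnd)
  hence "(norm2 (adjop A B T \<xi>))^2 \<le> (C * norm2 \<xi>)^2"
    using norm2_sq[OF ell] by (simp add: g_def[abs_def])
  thus "norm2 (adjop A B T \<xi>) \<le> C * norm2 \<xi>"
    by (rule power2_le_imp_le) (simp add: C)
qed

lemma tail_eq: assumes f: "f \<in> ell2 A" and F: "finite F"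
  shows "infsum (\<lambda>x. if x \<in> F then 0 else (cmod (f x))^2) UNIV
     = infsum (\<lambda>x. (cmod (f x))^2) UNIV - sum (\<lambda>x. (cmod (f x))^2) F"
proof -
  have s1: "(\<lambda>x. if x \<in> F then (cmod (f x))^2 else 0) summable_on UNIV"
    by (rule finite_support_summable[OF F]) auto
  have s2: "(\<lambda>x. if x \<in> F then 0 else (cmod (f x))^2) summable_on UNIV"
    by (rule summable_on_comparison_test[OF ell2_sum[OF f]]) auto
  have "infsum (\<lambda>x. (cmod (f x))^2) UNIV
      = infsum (\<lambda>x. (if x \<in> F then (cmod (f x))^2 else 0) + (if x \<in> F then 0 else (cmod (f x))^2)) UNIV"
    by (rule infsum_cong) auto
  also have "\<dots> = infsum (\<lambda>x. if x \<in> F then (cmod (f x))^2 else 0) UNIV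
       + infsum (\<lambda>x. if x \<in> F then 0 else (cmod (f x))^2) UNIV"
    by (rule infsum_add[OF s1 s2])
  also have "infsum (\<lambda>x. if x \<in> F then (cmod (f x))^2 else 0) UNIV = sum (\<lambda>x. (cmod (f x))^2) F"
    by (subst finite_support_infsum[OF F]) auto
  finally show ?thesis by simp
qed

lemma tail_tendsto: assumes f: "f \<in> ell2 A"
  shows "((\<lambda>F. infsum (\<lambda>x. if x \<in> F then 0 else (cmod (f x))^2) UNIV) \<longlongrightarrow> 0) (finite_subsets_at_top UNIV)"
proof -
  have "((\<lambda>F. sum (\<lambda>x. (cmod (f x))^2) F) \<longlongrightarrow> infsum (\<lambda>x. (cmod (f x))^2) UNIV) (finite_subsets_at_top UNIV)"
    by (rule infsum_tendsto[OF ell2_sum[OF f]])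
  hence "((\<lambda>F. infsum (\<lambda>x. (cmod (f x))^2) UNIV - sum (\<lambda>x. (cmod (f x))^2) F) \<longlongrightarrow>
      infsum (\<lambda>x. (cmod (f x))^2) UNIV - infsum (\<lambda>x. (cmod (f x))^2) UNIV) (finite_subsets_at_top UNIV)"
    by (intro tendsto_diff tendsto_const)
  hence "((\<lambda>F. infsum (\<lambda>x. (cmod (f x))^2) UNIV - sum (\<lambda>x. (cmod (f x))^2) F) \<longlongrightarrow> 0) (finite_subsets_at_top UNIV)"
    by simp
  moreover have "eventually (\<lambda>F. infsum (\<lambda>x. (cmod (f x))^2) UNIV - sum (\<lambda>x. (cmod (f x))^2) F
     = infsum (\<lambda>x. if x \<in> F then 0 else (cmod (f x))^2) UNIV) (finite_subsets_at_top UNIV)"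
    by (rule eventually_finite_subsets_at_top_weakI) (simp add: tail_eq[OF f])
  ultimately show ?thesis by (rule Lim_transform_eventually)
qed

lemma ip_diff_right: "f \<in> ell2 A \<Longrightarrow> g \<in> ell2 B \<Longrightarrow> h \<in> ell2 B \<Longrightarrow>
    ip f (\<lambda>x. g x - h x) = ip f g - ip f h"
  using ip_add_right[of f A g B "\<lambda>x. (-1) * h x"] ell2_scale[of h B "-1"] ip_scale_right[where c="-1" and f=f and g=h]
  by simp

lemma adj_ip:
  assumes T: "bop A B T" and xi: "\<xi> \<in> ell2 B" and eta: "\<eta> \<in> ell2 A"
  shows "ip \<xi> (T \<eta>) = ip (adjop A B T \<xi>) \<eta>"
proof -
  obtain C where C: "C \<ge> 0" "\<And>f. f \<in> ell2 A \<Longrightarrow> norm2 (T f) \<le> C * norm2 f" using bop_bound[OF T] by blast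
  define g where "g x = cnj (adjop A B T \<xi> x) * \<eta> x" for x
  define L where "L = ip \<xi> (T \<eta>)"
  define tl where "tl F = infsum (\<lambda>x. if x \<in> F then 0 else (cmod (\<eta> x))^2) UNIV" for F
  have sumg: "sum g F = ip \<xi> (T (trunc (F \<inter> A) \<eta>))" if F: "finite F" for F
  proof -
    have "sum g F = sum g (F \<inter> A)"
      using F by (intro sum.mono_neutral_right) (auto simp: g_def adjop_def)
    also have "\<dots> = (\<Sum>x\<in>F \<inter> A. \<eta> x * ip \<xi> (T (delta x)))"
      using xi by (intro sum.cong) (auto simp: g_def adjop_def ip_cnj[of \<xi>])
    also have "\<dots> = ip \<xi> (\<lambda>z. \<Sum>x\<in>F \<inter> A. \<eta> x * T (delta x) z)"
      by (rule ip_finsum_right[OF xi, symmetric]) (use F in \<open>auto intro: bopD1[OF T] delta_ell2\<close>)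
    also have "\<dots> = ip \<xi> (T (trunc (F \<inter> A) \<eta>))"
      using F by (simp add: bop_trunc[OF T])
    finally show ?thesis .
  qed
  have diffeq: "(\<lambda>x. \<eta> x - trunc (F \<inter> A) \<eta> x) = (\<lambda>x. if x \<in> F then 0 else \<eta> x)" for F
    using eta by (auto simp: trunc_def ell2_out)
  have bnd: "norm (sum g F - L) \<le> norm2 \<xi> * C * sqrt (tl F)" if F: "finite F" for F
  proof -
    have tr: "trunc (F \<inter> A) \<eta> \<in> ell2 A" by (rule trunc_ell2) (use F in auto)
    have de: "(\<lambda>x. \<eta> x - trunc (F \<inter> A) \<eta> x) \<in> ell2 A" by (rule ell2_minus[OF eta tr])
    have "sum g F - L = - ip \<xi> (\<lambda>y. T \<eta> y - T (trunc (F \<inter> A) \<eta>) y)"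
      unfolding sumg[OF F] L_def by (subst ip_diff_right[OF xi bopD1[OF T eta] bopD1[OF T tr]]) simp
    also have "(\<lambda>y. T \<eta> y - T (trunc (F \<inter> A) \<eta>) y) = T (\<lambda>x. \<eta> x - trunc (F \<inter> A) \<eta> x)"
      by (rule bop_diff[OF T eta tr, symmetric])
    finally have "norm (sum g F - L) = cmod (ip \<xi> (T (\<lambda>x. \<eta> x - trunc (F \<inter> A) \<eta> x)))" by simp
    also have "\<dots> \<le> norm2 \<xi> * norm2 (T (\<lambda>x. \<eta> x - trunc (F \<inter> A) \<eta> x))"
      by (rule cauchy_schwarz[OF xi bopD1[OF T de]])
    also have "\<dots> \<le> norm2 \<xi> * (C * norm2 (\<lambda>x. \<eta> x - trunc (F \<inter> A) \<eta> x))"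
      by (intro mult_left_mono C(2) de) simp
    also have "norm2 (\<lambda>x. \<eta> x - trunc (F \<inter> A) \<eta> x) = sqrt (tl F)"
      unfolding diffeq tl_def norm2_def by (intro arg_cong[where f=sqrt] infsum_cong) simp
    finally show ?thesis by (simp add: mult.assoc)
  qed
  have "((\<lambda>F. norm2 \<xi> * C * sqrt (tl F)) \<longlongrightarrow> norm2 \<xi> * C * sqrt 0) (finite_subsets_at_top UNIV)"
    unfolding tl_def by (intro tendsto_mult_left tendsto_real_sqrt tail_tendsto[OF eta])
  hence lim0: "((\<lambda>F. norm2 \<xi> * C * sqrt (tl F)) \<longlongrightarrow> 0) (finite_subsets_at_top UNIV)" by simp
  have ev: "eventually (\<lambda>F. norm (sum g F - L) \<le> norm2 \<xi> * C * sqrt (tl F)) (finite_subsets_at_top UNIV)"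
    by (rule eventually_finite_subsets_at_top_weakI) (rule bnd)
  have "((\<lambda>F. sum g F - L) \<longlongrightarrow> 0) (finite_subsets_at_top UNIV)"
    by (rule Lim_null_comparison[OF ev lim0])
  hence "(g has_sum L) UNIV"
    unfolding has_sum_def by (simp add: LIM_zero_iff)
  hence "infsum g UNIV = L" by (rule infsumI)
  thus ?thesis by (simp add: L_def ip_def g_def[abs_def])
qed

lemma bop_adjop: assumes T: "bop A B T" shows "bop B A (adjop A B T)"
proof -
  obtain C where C: "C \<ge> 0" "\<And>f. f \<in> ell2 A \<Longrightarrow> norm2 (T f) \<le> C * norm2 f" using bop_bound[OF T] by blast
  show ?thesis unfolding bop_def
  proof (intro conjI ballI allI impI)
    fix f assume f: "f \<in> ell2 B"
    show "adjop A B T f \<in> ell2 A" by (rule adj_ell2(1)[OF T C f])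
    show "\<And>c. adjop A B T (\<lambda>x. c * f x) = (\<lambda>y. c * adjop A B T f y)"
      using f by (auto simp: adjop_def ell2_scale ip_scale_right)
    fix g assume g: "g \<in> ell2 B"
    show "adjop A B T (\<lambda>x. f x + g x) = (\<lambda>y. adjop A B T f y + adjop A B T g y)"
      using f g by (auto simp: adjop_def ell2_add ip_add_right[OF bop_ell2[OF T]])
  next
    show "\<exists>K. \<forall>f\<in>ell2 B. norm2 (adjop A B T f) \<le> K * norm2 f"
      using adj_ell2(2)[OF T C] by blast
  next
    fix f assume "f \<notin> ell2 B"
    thus "adjop A B T f = (\<lambda>_. 0)" by (simp add: adjop_def)
  qed
qed

lemma adjoint_exists: "bop A B T \<Longrightarrow>
   \<exists>S. bop B A S \<and> (\<forall>\<xi>\<in>ell2 B. \<forall>\<eta>\<in>ell2 A. ip \<xi> (T \<eta>) = ip (S \<xi>) \<eta>)"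
  using bop_adjop adj_ip by blast

lemma normal_pairD: "normal_pair A \<xi> \<eta> \<Longrightarrow> \<xi> k \<in> ell2 A" "normal_pair A \<xi> \<eta> \<Longrightarrow> \<eta> k \<in> ell2 A"
  "normal_pair A \<xi> \<eta> \<Longrightarrow> summable (\<lambda>k. (norm2 (\<xi> k))^2)" "normal_pair A \<xi> \<eta> \<Longrightarrow> summable (\<lambda>k. (norm2 (\<eta> k))^2)"
  by (auto simp: normal_pair_def)

lemma Bop_iff: "T \<in> Bop A \<longleftrightarrow> bop A A T" by (simp add: Bop_def)

lemma nfun_term_bound:
  assumes np: "normal_pair A \<xi> \<eta>" and T: "bop A A T" and C: "C \<ge> 0" "\<And>f. f \<in> ell2 A \<Longrightarrow> norm2 (T f) \<le> C * norm2 f"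
  shows "cmod (ip (\<xi> k) (T (\<eta> k))) \<le> (1/2) * ((norm2 (\<xi> k))^2 + C^2 * (norm2 (\<eta> k))^2)"
proof -
  have "cmod (ip (\<xi> k) (T (\<eta> k))) \<le> (1/2) * ((norm2 (\<xi> k))^2 + (norm2 (T (\<eta> k)))^2)"
    by (rule ip_bound[OF normal_pairD(1)[OF np] bopD1[OF T normal_pairD(2)[OF np]]])
  also have "(norm2 (T (\<eta> k)))^2 \<le> C^2 * (norm2 (\<eta> k))^2"
  proof -
    have "(norm2 (T (\<eta> k)))^2 \<le> (C * norm2 (\<eta> k))^2"
      by (rule power_mono[OF C(2)[OF normal_pairD(2)[OF np]]]) simp
    thus ?thesis by (simp add: power_mult_distrib)
  qed
  finally show ?thesis by simp
qed

lemma nfun_summable: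
  assumes np: "normal_pair A \<xi> \<eta>" and T: "bop A A T"
  shows "summable (\<lambda>k. cmod (ip (\<xi> k) (T (\<eta> k))))" "summable (\<lambda>k. ip (\<xi> k) (T (\<eta> k)))"
proof -
  obtain C where C: "C \<ge> 0" "\<And>f. f \<in> ell2 A \<Longrightarrow> norm2 (T f) \<le> C * norm2 f" using bop_bound[OF T] by blast
  have s: "summable (\<lambda>k. (1/2) * ((norm2 (\<xi> k))^2 + C^2 * (norm2 (\<eta> k))^2))"
    using normal_pairD(3,4)[OF np] by (intro summable_mult summable_add) auto
  show "summable (\<lambda>k. cmod (ip (\<xi> k) (T (\<eta> k))))"
    by (rule summable_comparison_test[OF _ s]) (intro exI[of _ 0] allI impI, simp only: real_norm_def abs_norm_cancel, rule nfun_term_bound[OF np T C])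
  thus "summable (\<lambda>k. ip (\<xi> k) (T (\<eta> k)))" by (rule summable_norm_cancel)
qed

lemma nfun_oadd: assumes np: "normal_pair A \<xi> \<eta>" and S: "bop A A S" and T: "bop A A T"
  shows "nfun \<xi> \<eta> (oadd S T) = nfun \<xi> \<eta> S + nfun \<xi> \<eta> T"
  unfolding nfun_def
  apply (subst suminf_add[OF nfun_summable(2)[OF np S] nfun_summable(2)[OF np T]])
  apply (rule suminf_cong)
  unfolding oadd_def
  by (rule ip_add_right[OF normal_pairD(1)[OF np] bopD1[OF S normal_pairD(2)[OF np]] bopD1[OF T normal_pairD(2)[OF np]]])

lemma nfun_oscale: "normal_pair A \<xi> \<eta> \<Longrightarrow> bop A A T \<Longrightarrow> nfun \<xi> \<eta> (oscale c T) = c * nfun \<xi> \<eta> T"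
  unfolding nfun_def oscale_def ip_scale_right
  by (rule suminf_mult[OF nfun_summable(2)])

lemma normal_pair_right: "normal_pair A \<xi> \<eta> \<Longrightarrow> bop A A B \<Longrightarrow> normal_pair A \<xi> (\<lambda>k. B (\<eta> k))"
proof -
  assume np: "normal_pair A \<xi> \<eta>" and B: "bop A A B"
  obtain C where C: "C \<ge> 0" "\<And>f. f \<in> ell2 A \<Longrightarrow> norm2 (B f) \<le> C * norm2 f" using bop_bound[OF B] by blast
  have "summable (\<lambda>k. C^2 * (norm2 (\<eta> k))^2)" using normal_pairD(4)[OF np] by (rule summable_mult)
  hence "summable (\<lambda>k. (norm2 (B (\<eta> k)))^2)"
  proof (rule summable_comparison_test[rotated], intro exI allI impI)
    fix k
    have "(norm2 (B (\<eta> k)))^2 \<le> (C * norm2 (\<eta> k))^2"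
      by (rule power_mono[OF C(2)[OF normal_pairD(2)[OF np]]]) simp
    thus "norm ((norm2 (B (\<eta> k)))^2) \<le> C^2 * (norm2 (\<eta> k))^2" by (simp add: power_mult_distrib)
  qed
  thus ?thesis using np B by (auto simp: normal_pair_def bopD1)
qed

lemma normal_pair_left: "normal_pair A \<xi> \<eta> \<Longrightarrow> bop A A B \<Longrightarrow> normal_pair A (\<lambda>k. B (\<xi> k)) \<eta>"
proof -
  assume np: "normal_pair A \<xi> \<eta>" and B: "bop A A B"
  have np': "normal_pair A \<eta> \<xi>" using np by (auto simp: normal_pair_def)
  show ?thesis using normal_pair_right[OF np' B] by (auto simp: normal_pair_def)
qed

lemma nfun_comp_right: "nfun \<xi> \<eta> (T \<circ> B) = nfun \<xi> (\<lambda>k. B (\<eta> k)) T"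
  by (simp add: nfun_def)

lemma nfun_comp_left: assumes np: "normal_pair A \<xi> \<eta>" and B: "bop A A B" and T: "bop A A T"
  shows "nfun \<xi> \<eta> (B \<circ> T) = nfun (\<lambda>k. adjop A A B (\<xi> k)) \<eta> T"
  unfolding nfun_def o_def
  by (rule suminf_cong, rule adj_ip[OF B normal_pairD(1)[OF np] bopD1[OF T normal_pairD(2)[OF np]]])

lemma zero_normal_pair: "normal_pair A (\<lambda>_ _. 0) (\<lambda>_ _. 0)"
  by (simp add: normal_pair_def)

lemma topspace_wstar: "topspace (wstar A) = Bop A"
  unfolding wstar_def topology_generated_by_topspace
proof
  show "\<Union> {{T \<in> Bop A. nfun \<xi> \<eta> T \<in> U} |\<xi> \<eta> U. open U \<and> normal_pair A \<xi> \<eta>} \<subseteq> Bop A" by auto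
  show "Bop A \<subseteq> \<Union> {{T \<in> Bop A. nfun \<xi> \<eta> T \<in> U} |\<xi> \<eta> U. open U \<and> normal_pair A \<xi> \<eta>}"
    using zero_normal_pair[of A] by blast
qed

lemma wcont_affine:
  assumes into: "\<And>T. T \<in> Bop A \<Longrightarrow> \<Phi> T \<in> Bop A"
    and aff: "\<And>\<xi> \<eta>. normal_pair A \<xi> \<eta> \<Longrightarrow> \<exists>\<xi>' \<eta>' c a. normal_pair A \<xi>' \<eta>' \<and>
          (\<forall>T \<in> Bop A. nfun \<xi> \<eta> (\<Phi> T) = c + a * nfun \<xi>' \<eta>' T)"
  shows "continuous_map (wstar A) (wstar A) \<Phi>"
  unfolding continuous_map_def topspace_wstar
proof (intro conjI allI impI)
  show "\<Phi> \<in> Bop A \<rightarrow> Bop A" using into by auto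
  fix U assume "openin (wstar A) U"
  hence g: "generate_topology_on {{T \<in> Bop A. nfun \<xi> \<eta> T \<in> U} |\<xi> \<eta> U. open U \<and> normal_pair A \<xi> \<eta>} U"
    unfolding wstar_def by (rule openin_topology_generated_by)
  show "openin (wstar A) {x \<in> Bop A. \<Phi> x \<in> U}"
    using g
  proof (induction rule: generate_topology_on.induct)
    case Empty
    then show ?case by simp
  next
    case (Int a b)
    have "{x \<in> Bop A. \<Phi> x \<in> a \<inter> b} = {x \<in> Bop A. \<Phi> x \<in> a} \<inter> {x \<in> Bop A. \<Phi> x \<in> b}" by auto
    then show ?case using Int by auto
  next
    case (UN K)
    have "{x \<in> Bop A. \<Phi> x \<in> \<Union>K} = \<Union>((\<lambda>k. {x \<in> Bop A. \<Phi> x \<in> k}) ` K)" by auto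
    then show ?case using UN by auto
  next
    case (Basis s)
    then obtain \<xi> \<eta> V where s: "s = {T \<in> Bop A. nfun \<xi> \<eta> T \<in> V}" and V: "open V" and np: "normal_pair A \<xi> \<eta>"
      by blast
    obtain \<xi>' \<eta>' c a where np': "normal_pair A \<xi>' \<eta>'" and e: "\<forall>T \<in> Bop A. nfun \<xi> \<eta> (\<Phi> T) = c + a * nfun \<xi>' \<eta>' T"
      using aff[OF np] by blast
    have "{x \<in> Bop A. \<Phi> x \<in> s} = {T \<in> Bop A. c + a * nfun \<xi>' \<eta>' T \<in> V}"
      using s e into by auto
    also have "\<dots> = {T \<in> Bop A. nfun \<xi>' \<eta>' T \<in> (\<lambda>z. c + a * z) -` V}" by auto
    finally have eq: "{x \<in> Bop A. \<Phi> x \<in> s} = {T \<in> Bop A. nfun \<xi>' \<eta>' T \<in> (\<lambda>z. c + a * z) -` V}" .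
    have op: "open ((\<lambda>z. c + a * z) -` V)"
      by (rule open_vimage[OF V]) (intro continuous_intros)
    show ?case
      unfolding eq wstar_def by (rule topology_generated_by_Basis) (use np' op in blast)
  qed
qed

lemma wclosure_seq:
  assumes T: "T \<in> Bop A" and X: "\<And>m. X m \<in> S" "\<And>m. X m \<in> Bop A"
    and lim: "\<And>\<xi> \<eta>. normal_pair A \<xi> \<eta> \<Longrightarrow> (\<lambda>m. nfun \<xi> \<eta> (X m)) \<longlonglongrightarrow> nfun \<xi> \<eta> T"
  shows "T \<in> wstar A closure_of S"
  unfolding in_closure_of topspace_wstar
proof (intro conjI allI impI T)
  fix W assume "T \<in> W \<and> openin (wstar A) W"
  hence TO: "T \<in> W" and g: "generate_topology_on {{T \<in> Bop A. nfun \<xi> \<eta> T \<in> U} |\<xi> \<eta> U. open U \<and> normal_pair A \<xi> \<eta>} W"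
    unfolding wstar_def using openin_topology_generated_by by blast+
  have "T \<in> W \<longrightarrow> eventually (\<lambda>m. X m \<in> W) sequentially"
    using g
  proof (induction rule: generate_topology_on.induct)
    case Empty
    then show ?case by simp
  next
    case (Int a b)
    then show ?case by (auto intro: eventually_conj)
  next
    case (UN K)
    show ?case
    proof
      assume "T \<in> \<Union>K"
      then obtain k where k: "k \<in> K" "T \<in> k" by blast
      hence "eventually (\<lambda>m. X m \<in> k) sequentially" using UN by blast
      thus "eventually (\<lambda>m. X m \<in> \<Union>K) sequentially" by (rule eventually_mono) (use k in blast)
    qed
  next
    case (Basis s)
    then obtain \<xi> \<eta> V where s: "s = {T \<in> Bop A. nfun \<xi> \<eta> T \<in> V}" and V: "open V" and np: "normal_pair A \<xi> \<eta>"
      by blast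
    show ?case
    proof
      assume "T \<in> s"
      hence "nfun \<xi> \<eta> T \<in> V" using s by simp
      hence "eventually (\<lambda>m. nfun \<xi> \<eta> (X m) \<in> V) sequentially"
        using topological_tendstoD[OF lim[OF np] V] by blast
      thus "eventually (\<lambda>m. X m \<in> s) sequentially"
        by (rule eventually_mono) (simp add: s X(2))
    qed
  qed
  hence "eventually (\<lambda>m. X m \<in> W) sequentially" using TO by blast
  then obtain N where "\<And>m. m \<ge> N \<Longrightarrow> X m \<in> W" by (auto simp: eventually_sequentially)
  thus "\<exists>y. y \<in> S \<and> y \<in> W" using X(1) by blast
qed

lemma cont_oadd_left: "a \<in> Bop A \<Longrightarrow> continuous_map (wstar A) (wstar A) (\<lambda>T. oadd a T)"
  apply (rule wcont_affine)
   apply (simp add: Bop_iff bop_oadd)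
  subgoal for \<xi> \<eta>
    apply (rule exI[of _ \<xi>], rule exI[of _ \<eta>], rule exI[of _ "nfun \<xi> \<eta> a"], rule exI[of _ 1])
    by (simp add: Bop_iff nfun_oadd)
  done

lemma cont_oadd_right: "b \<in> Bop A \<Longrightarrow> continuous_map (wstar A) (wstar A) (\<lambda>T. oadd T b)"
  apply (rule wcont_affine)
   apply (simp add: Bop_iff bop_oadd)
  subgoal for \<xi> \<eta>
    apply (rule exI[of _ \<xi>], rule exI[of _ \<eta>], rule exI[of _ "nfun \<xi> \<eta> b"], rule exI[of _ 1])
    by (simp add: Bop_iff nfun_oadd)
  done

lemma cont_oscale: "continuous_map (wstar A) (wstar A) (\<lambda>T. oscale c T)"
  apply (rule wcont_affine)
   apply (simp add: Bop_iff bop_oscale)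
  subgoal for \<xi> \<eta>
    apply (rule exI[of _ \<xi>], rule exI[of _ \<eta>], rule exI[of _ 0], rule exI[of _ c])
    by (simp add: Bop_iff nfun_oscale)
  done

lemma cont_comp_right: "B \<in> Bop A \<Longrightarrow> continuous_map (wstar A) (wstar A) (\<lambda>T. T \<circ> B)"
  apply (rule wcont_affine)
   apply (simp add: Bop_iff bop_comp)
  subgoal for \<xi> \<eta>
    apply (rule exI[of _ \<xi>], rule exI[of _ "\<lambda>k. B (\<eta> k)"], rule exI[of _ 0], rule exI[of _ 1])
    by (simp add: Bop_iff nfun_comp_right normal_pair_right)
  done

lemma cont_comp_left: "B \<in> Bop A \<Longrightarrow> continuous_map (wstar A) (wstar A) (\<lambda>T. B \<circ> T)"
  apply (rule wcont_affine)
   apply (simp add: Bop_iff bop_comp)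
  subgoal for \<xi> \<eta>
    apply (rule exI[of _ "\<lambda>k. adjop A A B (\<xi> k)"], rule exI[of _ \<eta>], rule exI[of _ 0], rule exI[of _ 1])
    by (simp add: Bop_iff nfun_comp_left normal_pair_left bop_adjop)
  done

lemma image_closure_into:
  assumes c: "continuous_map (wstar A) (wstar A) \<Phi>" and sub: "\<Phi> ` S \<subseteq> L" and L: "closedin (wstar A) L"
  shows "\<Phi> ` (wstar A closure_of S) \<subseteq> L"
proof -
  have "\<Phi> ` (wstar A closure_of S) \<subseteq> wstar A closure_of (\<Phi> ` S)"
    by (rule continuous_map_image_closure_subset[OF c])
  also have "\<dots> \<subseteq> wstar A closure_of L" by (rule closure_of_mono[OF sub])
  also have "\<dots> = L" using L by (simp add: closure_of_closedin)
  finally show ?thesis .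
qed

definition linsp :: "'a set \<Rightarrow> ('a,'a) op set \<Rightarrow> bool" where
  "linsp A S \<longleftrightarrow> S \<subseteq> Bop A \<and> ozero \<in> S \<and> (\<forall>a\<in>S. \<forall>b\<in>S. oadd a b \<in> S) \<and> (\<forall>c. \<forall>a\<in>S. oscale c a \<in> S)"

lemma closure_linsp:
  assumes S: "linsp A S"
  shows "linsp A (wstar A closure_of S)"
proof -
  let ?L = "wstar A closure_of S"
  have SB: "S \<subseteq> Bop A" using S by (simp add: linsp_def)
  have LB: "?L \<subseteq> Bop A" using closure_of_subset_topspace[of "wstar A" S] by (simp add: topspace_wstar)
  have SL: "S \<subseteq> ?L" using closure_of_subset[of S "wstar A"] SB by (simp add: topspace_wstar)
  have cl: "closedin (wstar A) ?L" by simp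
  have add1: "oadd a b \<in> ?L" if a: "a \<in> S" and b: "b \<in> ?L" for a b
  proof -
    have "(\<lambda>T. oadd a T) ` S \<subseteq> ?L" using S a SL by (auto simp: linsp_def)
    hence "(\<lambda>T. oadd a T) ` ?L \<subseteq> ?L"
      by (rule image_closure_into[OF cont_oadd_left[OF subsetD[OF SB a]] _ cl])
    thus ?thesis using b by blast
  qed
  have add2: "oadd a b \<in> ?L" if a: "a \<in> ?L" and b: "b \<in> ?L" for a b
  proof -
    have "(\<lambda>T. oadd T b) ` S \<subseteq> ?L" using add1 b by auto
    hence "(\<lambda>T. oadd T b) ` ?L \<subseteq> ?L"
      by (rule image_closure_into[OF cont_oadd_right[OF subsetD[OF LB b]] _ cl])
    thus ?thesis using a by blast
  qed
  have sc: "oscale c a \<in> ?L" if a: "a \<in> ?L" for a c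
  proof -
    have "(\<lambda>T. oscale c T) ` S \<subseteq> ?L" using S SL by (auto simp: linsp_def)
    hence "(\<lambda>T. oscale c T) ` ?L \<subseteq> ?L"
      by (rule image_closure_into[OF cont_oscale _ cl])
    thus ?thesis using a by blast
  qed
  have "ozero \<in> ?L" using S SL by (auto simp: linsp_def)
  thus ?thesis using LB add2 sc by (simp add: linsp_def)
qed

lemma closure_mult:
  assumes S: "S \<subseteq> Bop A" and prod: "\<And>a b. a \<in> S \<Longrightarrow> b \<in> S \<Longrightarrow> a \<circ> b \<in> wstar A closure_of S"
    and a: "a \<in> wstar A closure_of S" and b: "b \<in> wstar A closure_of S"
  shows "a \<circ> b \<in> wstar A closure_of S"
proof -
  let ?L = "wstar A closure_of S"
  have LB: "?L \<subseteq> Bop A" using closure_of_subset_topspace[of "wstar A" S] by (simp add: topspace_wstar)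
  have cl: "closedin (wstar A) ?L" by simp
  have m1: "a \<circ> b \<in> ?L" if a: "a \<in> S" and b: "b \<in> ?L" for a b
  proof -
    have "(\<lambda>T. a \<circ> T) ` S \<subseteq> ?L" using prod a by auto
    hence "(\<lambda>T. a \<circ> T) ` ?L \<subseteq> ?L"
      by (rule image_closure_into[OF cont_comp_left[OF subsetD[OF S a]] _ cl])
    thus ?thesis using b by blast
  qed
  have "(\<lambda>T. T \<circ> b) ` S \<subseteq> ?L" using m1 b by auto
  hence "(\<lambda>T. T \<circ> b) ` ?L \<subseteq> ?L"
    by (rule image_closure_into[OF cont_comp_right[OF subsetD[OF LB b]] _ cl])
  thus ?thesis using a by blast
qed

lemma ospan_subset: "G \<subseteq> S \<Longrightarrow> linsp A S \<Longrightarrow> ospan G \<subseteq> S"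
proof
  fix x assume G: "G \<subseteq> S" and S: "linsp A S" and x: "x \<in> ospan G"
  from x show "x \<in> S"
    by induction (use G S in \<open>auto simp: linsp_def\<close>)
qed

lemma ospan_subalg_subset: "G \<subseteq> S \<Longrightarrow> subalg A S \<Longrightarrow> ospan G \<subseteq> S"
  by (rule ospan_subset) (auto simp: linsp_def subalg_def)

lemma linsp_ospan: "G \<subseteq> Bop A \<Longrightarrow> linsp A (ospan G)"
proof -
  assume G: "G \<subseteq> Bop A"
  have B: "ospan G \<subseteq> Bop A"
  proof
    fix x assume "x \<in> ospan G" thus "x \<in> Bop A"
      by induction (use G in \<open>auto simp: Bop_iff bop_ozero bop_oadd bop_oscale\<close>)
  qed
  have add: "oadd a b \<in> ospan G" if a: "a \<in> ospan G" and b: "b \<in> ospan G" for a b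
    using a
  proof induction
    case ospan_zero
    have "oadd ozero b = b" by (simp add: oadd_def ozero_def)
    then show ?case using b by simp
  next
    case (ospan_step S T c)
    have "oadd (oadd (oscale c T) S) b = oadd (oscale c T) (oadd S b)" by (simp add: oadd_def add.assoc)
    then show ?case using ospan_step by (simp add: ospan.ospan_step)
  qed
  have sc: "oscale d a \<in> ospan G" if a: "a \<in> ospan G" for a d
    using a
  proof induction
    case ospan_zero
    show ?case using ospan.ospan_zero[of G] by (simp add: oscale_def ozero_def)
  next
    case (ospan_step S T c)
    have "oscale d (oadd (oscale c T) S) = oadd (oscale (d*c) T) (oscale d S)" by (simp add: oadd_def oscale_def algebra_simps)
    then show ?case using ospan_step by (simp add: ospan.ospan_step)
  qed
  show ?thesis using B add sc by (simp add: linsp_def ospan.ospan_zero)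
qed

lemma gen_in_ospan: "g \<in> G \<Longrightarrow> g \<in> ospan G"
proof -
  assume g: "g \<in> G"
  have "oadd (oscale 1 g) ozero \<in> ospan G" by (rule ospan.ospan_step[OF ospan.ospan_zero g])
  moreover have "oadd (oscale 1 g) ozero = g" by (simp add: oadd_def oscale_def ozero_def)
  ultimately show ?thesis by simp
qed

lemma wspan_eq_walg:
  assumes G: "G \<subseteq> Bop A"
    and prod: "\<And>a b. a \<in> ospan G \<Longrightarrow> b \<in> ospan G \<Longrightarrow> a \<circ> b \<in> wspan A G"
  shows "wspan A G = walg A G"
proof
  show "wspan A G \<subseteq> walg A G"
    unfolding wspan_def walg_def
  proof (rule Inter_greatest)
    fix S assume "S \<in> {S. G \<subseteq> S \<and> subalg A S \<and> closedin (wstar A) S}"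
    hence S: "G \<subseteq> S" "subalg A S" "closedin (wstar A) S" by auto
    show "wstar A closure_of ospan G \<subseteq> S"
      by (rule closure_of_minimal[OF ospan_subalg_subset[OF S(1,2)] S(3)])
  qed
next
  let ?L = "wstar A closure_of ospan G"
  have lin: "linsp A ?L" by (rule closure_linsp[OF linsp_ospan[OF G]])
  have SB: "ospan G \<subseteq> Bop A" using linsp_ospan[OF G] by (simp add: linsp_def)
  have GL: "G \<subseteq> ?L"
    using closure_of_subset[of "ospan G" "wstar A"] SB gen_in_ospan by (auto simp: topspace_wstar)
  have mult: "\<forall>a\<in>?L. \<forall>b\<in>?L. a \<circ> b \<in> ?L"
    using closure_mult[OF SB] prod unfolding wspan_def by blast
  have "subalg A ?L" using lin mult by (auto simp: linsp_def subalg_def)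
  hence "?L \<in> {S. G \<subseteq> S \<and> subalg A S \<and> closedin (wstar A) S}" using GL by simp
  thus "walg A G \<subseteq> wspan A G" unfolding walg_def wspan_def by blast
qed

definition sl :: "('x \<times> 'w) vec \<Rightarrow> 'w \<Rightarrow> 'x vec" where "sl f w = (\<lambda>x. f (x, w))"

lemma swap_summable:
  fixes g :: "'x \<times> 'w \<Rightarrow> 'c::banach"
  shows "g summable_on UNIV \<Longrightarrow> (\<lambda>(w,x). g (x,w)) summable_on UNIV"
proof -
  assume g: "g summable_on UNIV"
  have b: "bij_betw prod.swap (UNIV :: ('w \<times> 'x) set) UNIV" by (auto simp: bij_betw_def inj_on_def image_def intro!: exI[of _ "prod.swap _"])
  have "(\<lambda>p. g (prod.swap p)) summable_on (UNIV :: ('w \<times> 'x) set)"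
    using summable_on_reindex_bij_betw[OF b, of g] g by simp
  thus ?thesis by (simp add: case_prod_unfold prod.swap_def)
qed

lemma fubini_swap:
  fixes g :: "'x \<times> 'w \<Rightarrow> 'c::banach"
  assumes g: "g summable_on UNIV"
  shows "infsum g UNIV = infsum (\<lambda>w. infsum (\<lambda>x. g (x,w)) UNIV) UNIV"
proof -
  have b: "bij_betw prod.swap (UNIV :: ('w \<times> 'x) set) UNIV" by (auto simp: bij_betw_def inj_on_def image_def intro!: exI[of _ "prod.swap _"])
  have s: "(\<lambda>(w,x). g (x,w)) summable_on (Sigma UNIV (\<lambda>_. UNIV))"
    using swap_summable[OF g] by simp
  have "infsum (\<lambda>w. infsum (\<lambda>x. g (x,w)) UNIV) UNIV = infsum (\<lambda>(w,x). g (x,w)) (Sigma UNIV (\<lambda>_. UNIV))"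
    using infsum_Sigma_banach[OF s] by simp
  also have "\<dots> = infsum (\<lambda>p. g (prod.swap p)) (UNIV :: ('w \<times> 'x) set)"
    by (simp add: case_prod_unfold prod.swap_def)
  also have "\<dots> = infsum g UNIV" by (rule infsum_reindex_bij_betw[OF b])
  finally show ?thesis by simp
qed

lemma fubini_inner:
  fixes g :: "'x \<times> 'w \<Rightarrow> 'c::{banach,complete_uniform_space,uniform_topological_group_add}"
  assumes g: "g summable_on UNIV"
  shows "(\<lambda>x. g (x,w)) summable_on UNIV"
proof -
  have s: "(\<lambda>(w,x). g (x,w)) summable_on (Sigma UNIV (\<lambda>_. UNIV))"
    using swap_summable[OF g] by simp
  show ?thesis using summable_on_SigmaD1[of "\<lambda>w x. g (x,w)", OF s] by simp
qed

lemma fubini_outer: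
  fixes g :: "'x \<times> 'w \<Rightarrow> 'c::{banach,complete_uniform_space,uniform_topological_group_add}"
  assumes g: "g summable_on UNIV"
  shows "(\<lambda>w. infsum (\<lambda>x. g (x,w)) UNIV) summable_on UNIV"
proof -
  have s: "(\<lambda>(w,x). g (x,w)) summable_on (Sigma UNIV (\<lambda>_. UNIV))"
    using swap_summable[OF g] by simp
  have "(\<lambda>w. infsum (\<lambda>x. (\<lambda>(w,x). g (x,w)) (w, x)) UNIV) summable_on UNIV"
    by (rule summable_on_SigmaD[OF s]) (use fubini_inner[OF g] in simp)
  thus ?thesis by simp
qed

lemma sl_ell2: "f \<in> ell2 (UNIV \<times> W) \<Longrightarrow> sl f w \<in> ell2 UNIV"
  unfolding sl_def by (rule ell2I) (auto intro: fubini_inner[OF ell2_sum])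

lemma sl_out: "f \<in> ell2 (UNIV \<times> W) \<Longrightarrow> w \<notin> W \<Longrightarrow> sl f w = (\<lambda>_. 0)"
  by (auto simp: sl_def ell2_out)

lemma norm2_sl_sq: "f \<in> ell2 (UNIV \<times> W) \<Longrightarrow> (norm2 (sl f w))^2 = infsum (\<lambda>x. (cmod (f (x,w)))^2) UNIV"
  using norm2_sq[OF sl_ell2] by (simp add: sl_def)

lemma sl_norm_summable: "f \<in> ell2 (UNIV \<times> W) \<Longrightarrow> (\<lambda>w. (norm2 (sl f w))^2) summable_on UNIV"
  using fubini_outer[OF ell2_sum, of f] by (simp add: norm2_sl_sq)

lemma sl_norm_sum: "f \<in> ell2 (UNIV \<times> W) \<Longrightarrow> (norm2 f)^2 = infsum (\<lambda>w. (norm2 (sl f w))^2) UNIV"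
  using fubini_swap[OF ell2_sum, of f] by (simp add: norm2_sl_sq norm2_sq)

lemma ell2_from_sl:
  fixes F :: "('x \<times> 'w) vec"
  assumes sl: "\<And>w. sl F w \<in> ell2 UNIV" and s: "(\<lambda>w. (norm2 (sl F w))^2) summable_on UNIV"
    and out: "\<And>x w. w \<notin> W \<Longrightarrow> F (x,w) = 0"
  shows "F \<in> ell2 (UNIV \<times> W)" "(norm2 F)^2 = infsum (\<lambda>w. (norm2 (sl F w))^2) UNIV"
proof -
  have hs: "((\<lambda>x. (\<lambda>(w,x). (cmod (F (x,w)))^2) (w,x)) has_sum (norm2 (sl F w))^2) UNIV" for w
    using norm2_sq[OF sl[of w]] ell2_sum[OF sl[of w]] by (simp add: sl_def has_sum_infsum)
  have "(\<lambda>(w,x). (cmod (F (x,w)))^2) summable_on Sigma UNIV (\<lambda>_. UNIV)"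
    by (rule summable_on_SigmaI[OF _ s]) (use hs in auto)
  hence s2: "(\<lambda>(w,x). (cmod (F (x,w)))^2) summable_on UNIV" by simp
  have "(\<lambda>(x,w). (\<lambda>(w,x). (cmod (F (x,w)))^2) (w,x)) summable_on UNIV"
    by (rule swap_summable[OF s2])
  hence s3: "(\<lambda>p. (cmod (F p))^2) summable_on UNIV" by (simp add: case_prod_unfold)
  show ell: "F \<in> ell2 (UNIV \<times> W)" by (rule ell2I) (use out s3 in auto)
  show "(norm2 F)^2 = infsum (\<lambda>w. (norm2 (sl F w))^2) UNIV" by (rule sl_norm_sum[OF ell])
qed

lemma ip_fubini: "F \<in> ell2 (UNIV \<times> W) \<Longrightarrow> G \<in> ell2 (UNIV \<times> W') \<Longrightarrow>
   ip F G = infsum (\<lambda>w. ip (sl F w) (sl G w)) UNIV"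
  unfolding ip_def sl_def by (rule fubini_swap[OF ip_summable])

lemma sl_eq: "(\<And>w. sl f w = sl g w) \<Longrightarrow> f = g"
  by (rule ext) (metis sl_def surj_pair)

definition tensg :: "enat \<Rightarrow> (nat list \<Rightarrow> nat list) \<Rightarrow> ('x,'x) op \<Rightarrow> ('x \<times> nat list, 'x \<times> nat list) op" where
  "tensg d \<sigma> u = (\<lambda>f. if f \<in> ell2 (UNIV \<times> words d)
      then (\<lambda>(x,w'). if w' \<in> range \<sigma> then u (sl f (inv \<sigma> w')) x else 0) else (\<lambda>_. 0))"

definition goodsh :: "enat \<Rightarrow> (nat list \<Rightarrow> nat list) \<Rightarrow> bool" where
  "goodsh d \<sigma> \<longleftrightarrow> inj_on \<sigma> UNIV \<and> (\<forall>w. \<sigma> w \<in> words d \<longleftrightarrow> w \<in> words d)"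

lemma goodsh_inj: "goodsh d \<sigma> \<Longrightarrow> inj_on \<sigma> UNIV" by (simp add: goodsh_def)
lemma goodsh_words: "goodsh d \<sigma> \<Longrightarrow> \<sigma> w \<in> words d \<longleftrightarrow> w \<in> words d" by (simp add: goodsh_def)

lemma goodsh_id: "goodsh d id" by (simp add: goodsh_def)
lemma goodsh_Cons: "i \<in> idx d \<Longrightarrow> goodsh d ((#) i)" by (simp add: goodsh_def words_def)
lemma goodsh_snoc: "i \<in> idx d \<Longrightarrow> goodsh d (\<lambda>w. w @ [i])" by (auto simp: goodsh_def words_def inj_on_def)
lemma goodsh_comp: "goodsh d \<tau> \<Longrightarrow> goodsh d \<sigma> \<Longrightarrow> goodsh d (\<tau> \<circ> \<sigma>)"
  by (auto simp: goodsh_def intro: inj_compose)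

lemma sl_tensg_in: "goodsh d \<sigma> \<Longrightarrow> f \<in> ell2 (UNIV \<times> words d) \<Longrightarrow> sl (tensg d \<sigma> u f) (\<sigma> w) = u (sl f w)"
  by (simp add: tensg_def sl_def goodsh_inj)

lemma sl_tensg_out: "w' \<notin> range \<sigma> \<Longrightarrow> sl (tensg d \<sigma> u f) w' = (\<lambda>_. 0)"
  by (simp add: tensg_def sl_def)

lemma sl_tensg_off: "f \<notin> ell2 (UNIV \<times> words d) \<Longrightarrow> tensg d \<sigma> u f = (\<lambda>_. 0)"
  by (simp add: tensg_def)

lemma range_reindex_summable:
  fixes g :: "nat list \<Rightarrow> 'c::{comm_monoid_add,topological_space}"
  assumes inj: "inj_on \<sigma> UNIV" and z: "\<And>w'. w' \<notin> range \<sigma> \<Longrightarrow> g w' = 0"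
  shows "g summable_on UNIV \<longleftrightarrow> (\<lambda>w. g (\<sigma> w)) summable_on UNIV"
proof -
  have "g summable_on UNIV \<longleftrightarrow> g summable_on range \<sigma>"
    by (rule summable_on_cong_neutral) (use z in auto)
  also have "\<dots> \<longleftrightarrow> (g \<circ> \<sigma>) summable_on UNIV" by (rule summable_on_reindex) (use inj in simp)
  finally show ?thesis by (simp add: o_def)
qed

lemma range_reindex_infsum:
  fixes g :: "nat list \<Rightarrow> 'c::{comm_monoid_add,t2_space}"
  assumes inj: "inj_on \<sigma> UNIV" and z: "\<And>w'. w' \<notin> range \<sigma> \<Longrightarrow> g w' = 0"
  shows "infsum g UNIV = infsum (\<lambda>w. g (\<sigma> w)) UNIV"
proof -
  have "infsum g UNIV = infsum g (range \<sigma>)"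
    by (rule infsum_cong_neutral) (use z in auto)
  also have "\<dots> = infsum (g \<circ> \<sigma>) UNIV" by (rule infsum_reindex) (use inj in simp)
  finally show ?thesis by (simp add: o_def)
qed

lemma tensg_vanish:
  assumes g: "goodsh d \<sigma>" and u: "bop UNIV UNIV u" and f: "f \<in> ell2 (UNIV \<times> words d)" and w: "w' \<notin> words d"
  shows "tensg d \<sigma> u f (x, w') = 0"
proof (cases "w' \<in> range \<sigma>")
  case True
  then obtain w where w': "w' = \<sigma> w" by blast
  hence "w \<notin> words d" using w goodsh_words[OF g] by simp
  hence "sl f w = (\<lambda>_. 0)" by (rule sl_out[OF f])
  thus ?thesis using w' g f bop_zero[OF u] by (simp add: tensg_def goodsh_inj)
qed (simp add: tensg_def)

lemma tensg_ell2_norm: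
  assumes g: "goodsh d \<sigma>" and u: "bop UNIV UNIV u" and C: "C \<ge> 0" "\<And>h. h \<in> ell2 UNIV \<Longrightarrow> norm2 (u h) \<le> C * norm2 h"
    and f: "f \<in> ell2 (UNIV \<times> words d)"
  shows "tensg d \<sigma> u f \<in> ell2 (UNIV \<times> words d)" "norm2 (tensg d \<sigma> u f) \<le> C * norm2 f"
proof -
  let ?F = "tensg d \<sigma> u f"
  have inj: "inj_on \<sigma> UNIV" by (rule goodsh_inj[OF g])
  have slF: "sl ?F w' \<in> ell2 UNIV" for w'
    by (cases "w' \<in> range \<sigma>") (auto simp: sl_tensg_in[OF g f] sl_tensg_out bopD1[OF u sl_ell2[OF f]])
  have z: "\<And>w'. w' \<notin> range \<sigma> \<Longrightarrow> (norm2 (sl ?F w'))^2 = 0" by (simp add: sl_tensg_out)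
  have cmp: "(norm2 (sl ?F (\<sigma> w)))^2 \<le> C^2 * (norm2 (sl f w))^2" for w
  proof -
    have "(norm2 (u (sl f w)))^2 \<le> (C * norm2 (sl f w))^2"
      by (rule power_mono[OF C(2)[OF sl_ell2[OF f]]]) simp
    thus ?thesis by (simp add: sl_tensg_in[OF g f] power_mult_distrib)
  qed
  have s1: "(\<lambda>w. C^2 * (norm2 (sl f w))^2) summable_on UNIV"
    by (rule summable_on_cmult_right[OF sl_norm_summable[OF f]])
  have s2: "(\<lambda>w. (norm2 (sl ?F (\<sigma> w)))^2) summable_on UNIV"
    by (rule summable_on_comparison_test[OF s1]) (use cmp in auto)
  have s3: "(\<lambda>w'. (norm2 (sl ?F w'))^2) summable_on UNIV"
    using range_reindex_summable[OF inj z] s2 by simp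
  have e: "?F \<in> ell2 (UNIV \<times> words d) \<and> (norm2 ?F)^2 = infsum (\<lambda>w'. (norm2 (sl ?F w'))^2) UNIV"
    using ell2_from_sl[OF slF s3, of "words d"] tensg_vanish[OF g u f] by blast
  thus "?F \<in> ell2 (UNIV \<times> words d)" by simp
  have "(norm2 ?F)^2 = infsum (\<lambda>w. (norm2 (sl ?F (\<sigma> w)))^2) UNIV"
    using e range_reindex_infsum[OF inj z] by simp
  also have "\<dots> \<le> infsum (\<lambda>w. C^2 * (norm2 (sl f w))^2) UNIV"
    by (rule infsum_mono[OF s2 s1 cmp])
  also have "\<dots> = C^2 * (norm2 f)^2"
    by (simp add: infsum_cmult_right' sl_norm_sum[OF f])
  also have "\<dots> = (C * norm2 f)^2" by (simp add: power_mult_distrib)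
  finally show "norm2 ?F \<le> C * norm2 f"
    by (rule power2_le_imp_le) (simp add: C)
qed

lemma sl_add: "sl (\<lambda>x. f x + g x) w = (\<lambda>x. sl f w x + sl g w x)" by (simp add: sl_def)
lemma sl_scale: "sl (\<lambda>x. c * f x) w = (\<lambda>x. c * sl f w x)" by (simp add: sl_def)

lemma bop_tensg:
  fixes u :: "('x,'x) op"
  assumes g: "goodsh d \<sigma>" and u: "bop UNIV UNIV u"
  shows "bop (UNIV \<times> words d) (UNIV \<times> words d) (tensg d \<sigma> u)"
proof -
  obtain C where C: "C \<ge> 0" "\<And>h. h \<in> ell2 UNIV \<Longrightarrow> norm2 (u h) \<le> C * norm2 h" using bop_bound[OF u] by blast
  show ?thesis unfolding bop_def
  proof (intro conjI ballI allI impI)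
    fix f :: "('x \<times> nat list) vec" assume f: "f \<in> ell2 (UNIV \<times> words d)"
    show "tensg d \<sigma> u f \<in> ell2 (UNIV \<times> words d)" by (rule tensg_ell2_norm(1)[OF g u C f])
    show "\<And>c. tensg d \<sigma> u (\<lambda>x. c * f x) = (\<lambda>y. c * tensg d \<sigma> u f y)"
      using f by (auto simp: tensg_def ell2_scale sl_scale bopD_scale[OF u sl_ell2[OF f]])
    fix h :: "('x \<times> nat list) vec" assume h: "h \<in> ell2 (UNIV \<times> words d)"
    show "tensg d \<sigma> u (\<lambda>x. f x + h x) = (\<lambda>y. tensg d \<sigma> u f y + tensg d \<sigma> u h y)"
      using f h by (auto simp: tensg_def ell2_add sl_add bopD_add[OF u sl_ell2[OF f] sl_ell2[OF h]])
  next
    show "\<exists>K. \<forall>f\<in>ell2 ((UNIV::'x set) \<times> words d). norm2 (tensg d \<sigma> u f) \<le> K * norm2 f"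
      using tensg_ell2_norm(2)[OF g u C] by blast
  next
    fix f :: "('x \<times> nat list) vec" assume "f \<notin> ell2 (UNIV \<times> words d)"
    thus "tensg d \<sigma> u f = (\<lambda>_. 0)" by (rule sl_tensg_off)
  qed
qed

lemma rho_tensg: "rho d y = tensg d id y"
  by (rule ext) (simp add: rho_def tensg_def sl_def)

lemma tensl_tensg: "tensl d i u = tensg d ((#) i) u"
proof (rule ext)
  fix f
  show "tensl d i u f = tensg d ((#) i) u f"
  proof (cases "f \<in> ell2 (UNIV \<times> words d)")
    case True
    have inj: "inj_on ((#) i) UNIV" by simp
    show ?thesis
    proof (rule ext, clarify)
      fix x w'
      show "tensl d i u f (x, w') = tensg d ((#) i) u f (x, w')"
      proof (cases w')
        case Nil then show ?thesis using True by (auto simp: tensl_def tensg_def)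
      next
        case (Cons k w)
        show ?thesis
        proof (cases "k = i")
          case True
          then show ?thesis using Cons \<open>f \<in> _\<close> by (simp add: tensl_def tensg_def sl_def inv_f_f[OF inj])
        next
          case False
          then show ?thesis using Cons \<open>f \<in> _\<close> by (auto simp: tensl_def tensg_def)
        qed
      qed
    qed
  qed (simp add: tensl_def tensg_def)
qed

lemma tensr_tensg: "tensr d i u = tensg d (\<lambda>w. w @ [i]) u"
proof (rule ext)
  fix f
  show "tensr d i u f = tensg d (\<lambda>w. w @ [i]) u f"
  proof (cases "f \<in> ell2 (UNIV \<times> words d)")
    case True
    have inj: "inj_on (\<lambda>w::nat list. w @ [i]) UNIV" by (simp add: inj_on_def)
    show ?thesis
    proof (rule ext, clarify)
      fix x w'
      show "tensr d i u f (x, w') = tensg d (\<lambda>w. w @ [i]) u f (x, w')"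
      proof (cases "w' \<noteq> [] \<and> last w' = i")
        case c: True
        hence e: "w' = butlast w' @ [i]" by (metis append_butlast_last_id)
        hence r: "w' \<in> range (\<lambda>w. w @ [i])" by blast
        have "inv (\<lambda>w. w @ [i]) w' = butlast w'"
          by (subst e, subst inv_f_f[OF inj]) simp
        then show ?thesis using c r True by (simp add: tensr_def tensg_def sl_def)
      next
        case c: False
        hence "w' \<notin> range (\<lambda>w. w @ [i])" by auto
        then show ?thesis using c True by (auto simp: tensr_def tensg_def)
      qed
    qed
  qed (simp add: tensr_def tensg_def)
qed

lemma tensg_zero: "goodsh d \<sigma> \<Longrightarrow> bop UNIV UNIV u \<Longrightarrow> tensg d \<sigma> u (\<lambda>_. 0) = (\<lambda>_. 0)"
  by (rule bop_zero[OF bop_tensg])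

lemma tensg_comp:
  fixes a b :: "('x,'x) op"
  assumes gt: "goodsh d \<tau>" and gs: "goodsh d \<sigma>" and a: "bop UNIV UNIV a" and b: "bop UNIV UNIV b"
  shows "tensg d \<tau> a \<circ> tensg d \<sigma> b = tensg d (\<tau> \<circ> \<sigma>) (a \<circ> b)"
proof (rule ext)
  fix f :: "('x \<times> nat list) vec"
  have gts: "goodsh d (\<tau> \<circ> \<sigma>)" by (rule goodsh_comp[OF gt gs])
  have ab: "bop UNIV UNIV (a \<circ> b)" by (rule bop_comp[OF b a])
  show "(tensg d \<tau> a \<circ> tensg d \<sigma> b) f = tensg d (\<tau> \<circ> \<sigma>) (a \<circ> b) f"
  proof (cases "f \<in> ell2 (UNIV \<times> words d)")
    case f: True
    let ?G = "tensg d \<sigma> b f"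
    have G: "?G \<in> ell2 (UNIV \<times> words d)" by (rule bopD1[OF bop_tensg[OF gs b] f])
    show ?thesis unfolding o_def[of "tensg d \<tau> a"]
    proof (rule sl_eq)
      fix w''
      show "sl (tensg d \<tau> a ?G) w'' = sl (tensg d (\<tau> \<circ> \<sigma>) (a \<circ> b) f) w''"
      proof (cases "w'' \<in> range \<tau>")
        case True
        then obtain w' where w': "w'' = \<tau> w'" by blast
        show ?thesis
        proof (cases "w' \<in> range \<sigma>")
          case True
          then obtain w where w: "w' = \<sigma> w" by blast
          have "sl (tensg d \<tau> a ?G) w'' = a (b (sl f w))"
            unfolding w' w by (simp add: sl_tensg_in[OF gt G] sl_tensg_in[OF gs f])
          moreover have "sl (tensg d (\<tau> \<circ> \<sigma>) (a \<circ> b) f) w'' = a (b (sl f w))"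
            unfolding w' w using sl_tensg_in[OF gts f, of "a \<circ> b" w] by simp
          ultimately show ?thesis by simp
        next
          case False
          have "sl (tensg d \<tau> a ?G) w'' = a (\<lambda>_. 0)"
            unfolding w' by (simp add: sl_tensg_in[OF gt G] sl_tensg_out[OF False])
          also have "\<dots> = (\<lambda>_. 0)" by (rule bop_zero[OF a])
          also have "\<dots> = sl (tensg d (\<tau> \<circ> \<sigma>) (a \<circ> b) f) w''"
          proof (rule sl_tensg_out[symmetric])
            show "w'' \<notin> range (\<tau> \<circ> \<sigma>)"
              using False goodsh_inj[OF gt] unfolding w' by (auto simp: inj_on_def)
          qed
          finally show ?thesis .
        qed
      next
        case False
        hence "w'' \<notin> range (\<tau> \<circ> \<sigma>)" by auto
        thus ?thesis by (simp add: sl_tensg_out False)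
      qed
    qed
  next
    case False
    thus ?thesis by (simp add: sl_tensg_off tensg_zero[OF gt a])
  qed
qed

lemma tensg_oadd: "tensg d \<sigma> (oadd a b) = oadd (tensg d \<sigma> a) (tensg d \<sigma> b)"
  by (auto simp: tensg_def oadd_def fun_eq_iff)

lemma tensg_oscale: "tensg d \<sigma> (oscale c a) = oscale c (tensg d \<sigma> a)"
  by (auto simp: tensg_def oscale_def fun_eq_iff)

lemma ip_tensg:
  fixes u :: "('x,'x) op"
  assumes g: "goodsh d \<sigma>" and u: "bop UNIV UNIV u" and F: "F \<in> ell2 (UNIV \<times> words d)" and G: "G \<in> ell2 (UNIV \<times> words d)"
  shows "ip F (tensg d \<sigma> u G) = infsum (\<lambda>w. ip (sl F (\<sigma> w)) (u (sl G w))) UNIV"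
proof -
  have TG: "tensg d \<sigma> u G \<in> ell2 (UNIV \<times> words d)" by (rule bopD1[OF bop_tensg[OF g u] G])
  have "ip F (tensg d \<sigma> u G) = infsum (\<lambda>w'. ip (sl F w') (sl (tensg d \<sigma> u G) w')) UNIV"
    by (rule ip_fubini[OF F TG])
  also have "\<dots> = infsum (\<lambda>w. ip (sl F (\<sigma> w)) (sl (tensg d \<sigma> u G) (\<sigma> w))) UNIV"
    by (rule range_reindex_infsum[OF goodsh_inj[OF g]]) (simp add: sl_tensg_out)
  also have "\<dots> = infsum (\<lambda>w. ip (sl F (\<sigma> w)) (u (sl G w))) UNIV"
    by (simp add: sl_tensg_in[OF g G])
  finally show ?thesis .
qed

lemma sl_shift_summable:
  assumes g: "goodsh d \<sigma>" and F: "F \<in> ell2 (UNIV \<times> words d)"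
  shows "(\<lambda>w. (norm2 (sl F (\<sigma> w)))^2) summable_on UNIV"
    "infsum (\<lambda>w. (norm2 (sl F (\<sigma> w)))^2) UNIV \<le> (norm2 F)^2"
proof -
  have s: "(\<lambda>w'. (norm2 (sl F w'))^2) summable_on UNIV" by (rule sl_norm_summable[OF F])
  have sr: "(\<lambda>w'. (norm2 (sl F w'))^2) summable_on range \<sigma>" by (rule summable_on_subset_banach[OF s]) simp
  have inj: "inj_on \<sigma> UNIV" by (rule goodsh_inj[OF g])
  have "((\<lambda>w'. (norm2 (sl F w'))^2) \<circ> \<sigma>) summable_on UNIV"
    using summable_on_reindex[OF inj] sr by blast
  thus s2: "(\<lambda>w. (norm2 (sl F (\<sigma> w)))^2) summable_on UNIV" by (simp add: o_def)
  have "infsum (\<lambda>w. (norm2 (sl F (\<sigma> w)))^2) UNIV = infsum (\<lambda>w'. (norm2 (sl F w'))^2) (range \<sigma>)"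
    using infsum_reindex[OF inj, of "\<lambda>w'. (norm2 (sl F w'))^2"] by (simp add: o_def)
  also have "\<dots> \<le> infsum (\<lambda>w'. (norm2 (sl F w'))^2) UNIV"
    by (rule infsum_mono2[OF sr s]) auto
  also have "\<dots> = (norm2 F)^2" by (rule sl_norm_sum[OF F, symmetric])
  finally show "infsum (\<lambda>w. (norm2 (sl F (\<sigma> w)))^2) UNIV \<le> (norm2 F)^2" .
qed

lemma norm_infsum_dom:
  fixes f :: "'a \<Rightarrow> complex"
  assumes h: "h summable_on UNIV" and b: "\<And>x. cmod (f x) \<le> h x"
  shows "cmod (infsum f UNIV) \<le> infsum h UNIV"
proof -
  have s: "(\<lambda>x. norm (f x)) summable_on UNIV"
    by (rule summable_on_comparison_test[OF h]) (use b in auto)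
  have "cmod (infsum f UNIV) \<le> infsum (\<lambda>x. norm (f x)) UNIV"
    by (rule norm_infsum_bound) (use s in simp)
  also have "\<dots> \<le> infsum h UNIV" by (rule infsum_mono[OF s h]) (use b in simp)
  finally show ?thesis .
qed

lemma tensg_weak:
  fixes a :: "nat \<Rightarrow> ('x,'x) op" and a0 :: "('x,'x) op"
  assumes g: "goodsh d \<sigma>" and np: "normal_pair (UNIV \<times> words d) \<xi> \<eta>"
    and a: "\<And>m. bop UNIV UNIV (a m)" and a0: "bop UNIV UNIV a0"
    and lim: "\<And>f h. f \<in> ell2 UNIV \<Longrightarrow> h \<in> ell2 UNIV \<Longrightarrow> (\<lambda>m. ip f (a m h)) \<longlonglongrightarrow> ip f (a0 h)"
    and M: "M \<ge> 0"
    and bnd: "\<And>m f h. f \<in> ell2 UNIV \<Longrightarrow> h \<in> ell2 UNIV \<Longrightarrow> cmod (ip f (a m h)) \<le> M * ((norm2 f)^2 + (norm2 h)^2)"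
  shows "(\<lambda>m. nfun \<xi> \<eta> (tensg d \<sigma> (a m))) \<longlonglongrightarrow> nfun \<xi> \<eta> (tensg d \<sigma> a0)"
proof -
  have xi: "\<And>k. \<xi> k \<in> ell2 (UNIV \<times> words d)" and eta: "\<And>k. \<eta> k \<in> ell2 (UNIV \<times> words d)"
    using np by (auto simp: normal_pair_def)
  define hk where "hk k w = M * ((norm2 (sl (\<xi> k) (\<sigma> w)))^2 + (norm2 (sl (\<eta> k) w))^2)" for k w
  have hks: "hk k summable_on UNIV" for k
    unfolding hk_def
    by (intro summable_on_cmult_right summable_on_add sl_shift_summable(1)[OF g xi] sl_norm_summable[OF eta])
  have hkb: "infsum (hk k) UNIV \<le> M * ((norm2 (\<xi> k))^2 + (norm2 (\<eta> k))^2)" for k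
  proof -
    have "infsum (hk k) UNIV = M * (infsum (\<lambda>w. (norm2 (sl (\<xi> k) (\<sigma> w)))^2) UNIV + infsum (\<lambda>w. (norm2 (sl (\<eta> k) w))^2) UNIV)"
      unfolding hk_def
      by (simp only: infsum_cmult_right' infsum_add[OF sl_shift_summable(1)[OF g xi] sl_norm_summable[OF eta]])
    also have "\<dots> \<le> M * ((norm2 (\<xi> k))^2 + (norm2 (\<eta> k))^2)"
      using sl_shift_summable(2)[OF g xi, of k] sl_norm_sum[OF eta, of k] M
      by (intro mult_left_mono) auto
    finally show ?thesis .
  qed
  define I where "I k m = ip (\<xi> k) (tensg d \<sigma> (a m) (\<eta> k))" for k m
  define I0 where "I0 k = ip (\<xi> k) (tensg d \<sigma> a0 (\<eta> k))" for k
  have Ie: "I k m = infsum (\<lambda>w. ip (sl (\<xi> k) (\<sigma> w)) (a m (sl (\<eta> k) w))) UNIV" for k m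
    unfolding I_def by (rule ip_tensg[OF g a xi eta])
  have I0e: "I0 k = infsum (\<lambda>w. ip (sl (\<xi> k) (\<sigma> w)) (a0 (sl (\<eta> k) w))) UNIV" for k
    unfolding I0_def by (rule ip_tensg[OF g a0 xi eta])
  have termb: "cmod (ip (sl (\<xi> k) (\<sigma> w)) (a m (sl (\<eta> k) w))) \<le> hk k w" for k m w
    unfolding hk_def by (rule bnd[OF sl_ell2[OF xi] sl_ell2[OF eta]])
  have limk: "(\<lambda>m. I k m) \<longlonglongrightarrow> I0 k" for k
    unfolding Ie I0e
    by (rule infsum_dominated[OF hks termb lim[OF sl_ell2[OF xi] sl_ell2[OF eta]]])
  have bndk: "cmod (I k m) \<le> M * ((norm2 (\<xi> k))^2 + (norm2 (\<eta> k))^2)" for k m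
  proof -
    have "cmod (I k m) \<le> infsum (hk k) UNIV" unfolding Ie by (rule norm_infsum_dom[OF hks termb])
    thus ?thesis by (rule order_trans[OF _ hkb])
  qed
  have sM: "summable (\<lambda>k. M * ((norm2 (\<xi> k))^2 + (norm2 (\<eta> k))^2))"
    using np by (intro summable_mult summable_add) (auto simp: normal_pair_def)
  have ev: "eventually (\<lambda>(k,n). norm (I k n) \<le> M * ((norm2 (\<xi> k))^2 + (norm2 (\<eta> k))^2)) (at_top \<times>\<^sub>F sequentially)"
    by (rule always_eventually) (simp add: case_prod_unfold bndk)
  have nb: "(sequentially :: nat filter) \<noteq> bot" by simp
  have "(\<lambda>m. suminf (\<lambda>k. I k m)) \<longlonglongrightarrow> suminf I0"
    using tannerys_theorem[OF limk ev sM nb] by blast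
  thus ?thesis unfolding nfun_def I_def I0_def .
qed

lemma term_le_infsum:
  fixes f :: "'a \<Rightarrow> real"
  assumes s: "f summable_on UNIV" and n: "\<And>x. f x \<ge> 0"
  shows "f k \<le> infsum f UNIV"
proof -
  have "infsum f {k} \<le> infsum f UNIV" by (rule infsum_mono2[OF _ s]) (use n in auto)
  thus ?thesis by simp
qed

lemma sl_single_bound: "F \<in> ell2 (UNIV \<times> J) \<Longrightarrow> norm2 (sl F k) \<le> norm2 F"
proof -
  assume F: "F \<in> ell2 (UNIV \<times> J)"
  have "(norm2 (sl F k))^2 \<le> infsum (\<lambda>w. (norm2 (sl F w))^2) UNIV"
    by (rule term_le_infsum[OF sl_norm_summable[OF F]]) simp
  also have "\<dots> = (norm2 F)^2" by (rule sl_norm_sum[OF F, symmetric])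
  finally show ?thesis by (rule power2_le_imp_le) simp
qed

lemma norm2_mono: "g \<in> ell2 A \<Longrightarrow> f \<in> ell2 B \<Longrightarrow> (\<And>x. cmod (f x) \<le> cmod (g x)) \<Longrightarrow> norm2 f \<le> norm2 g"
  unfolding norm2_def
  by (intro real_sqrt_le_mono infsum_mono ell2_sum) (auto intro: power_mono)

lemma sl_inj: "g \<in> ell2 UNIV \<Longrightarrow> sl (inj j g) k = (if k = j then g else (\<lambda>_. 0))"
  by (auto simp: inj_def sl_def)

lemma inj_ell2:
  assumes j: "j \<in> J" and g: "g \<in> ell2 UNIV"
  shows "inj j g \<in> ell2 (UNIV \<times> J)" "norm2 (inj j g) = norm2 g"
proof -
  have s: "(\<lambda>k. (norm2 (sl (inj j g) k))^2) summable_on UNIV"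
    by (rule finite_support_summable[of "{j}"]) (auto simp: sl_inj[OF g])
  have sl: "\<And>k. sl (inj j g) k \<in> ell2 UNIV" by (simp add: sl_inj[OF g] g)
  have out: "\<And>x k. k \<notin> J \<Longrightarrow> inj j g (x, k) = 0" using j g by (auto simp: inj_def)
  show e: "inj j g \<in> ell2 (UNIV \<times> J)" by (rule ell2_from_sl(1)[OF sl s out])
  have "(norm2 (inj j g))^2 = infsum (\<lambda>k. (norm2 (sl (inj j g) k))^2) UNIV"
    by (rule ell2_from_sl(2)[OF sl s out])
  also have "\<dots> = (\<Sum>k\<in>{j}. (norm2 (sl (inj j g) k))^2)"
    by (rule finite_support_infsum) (auto simp: sl_inj[OF g])
  also have "\<dots> = (norm2 g)^2" by (simp add: sl_inj[OF g])
  finally show "norm2 (inj j g) = norm2 g" by (simp add: power2_eq_iff_nonneg)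
qed

lemma bop_inj: "j \<in> J \<Longrightarrow> bop UNIV (UNIV \<times> J) (inj j :: ('x, 'x \<times> nat) op)"
  unfolding bop_def
proof (intro conjI ballI allI impI)
  fix f :: "'x vec" assume j: "j \<in> J" and f: "f \<in> ell2 UNIV"
  show "inj j f \<in> ell2 (UNIV \<times> J)" by (rule inj_ell2(1)[OF j f])
  show "\<And>c. inj j (\<lambda>x. c * f x) = (\<lambda>y. c * inj j f y)" using f by (auto simp: inj_def ell2_scale)
  fix g :: "'x vec" assume g: "g \<in> ell2 UNIV"
  show "inj j (\<lambda>x. f x + g x) = (\<lambda>y. inj j f y + inj j g y)" using f g by (auto simp: inj_def ell2_add)
next
  assume j: "j \<in> J"
  show "\<exists>C. \<forall>f\<in>ell2 (UNIV::'x set). norm2 (inj j f) \<le> C * norm2 f"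
  proof (intro exI[of _ 1] ballI)
    fix f :: "'x vec" assume f: "f \<in> ell2 UNIV"
    show "norm2 (inj j f) \<le> 1 * norm2 f" using inj_ell2(2)[OF j f] by simp
  qed
next
  fix f :: "'x vec" assume "f \<notin> ell2 UNIV" thus "inj j f = (\<lambda>_. 0)" by (simp add: inj_def)
qed

definition vv :: "('x, 'x \<times> nat) op \<Rightarrow> nat \<Rightarrow> ('x,'x) op" where "vv V k = (\<lambda>g. sl (V g) k)"

lemma bop_vv: fixes V :: "('x, 'x \<times> nat) op" assumes V: "bop UNIV (UNIV \<times> J) V" shows "bop UNIV UNIV (vv V k)"
proof -
  obtain C where C: "C \<ge> 0" "\<And>f. f \<in> ell2 UNIV \<Longrightarrow> norm2 (V f) \<le> C * norm2 f" using bop_bound[OF V] by blast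
  show ?thesis unfolding bop_def vv_def
  proof (intro conjI ballI allI impI)
    fix f :: "'x vec" assume f: "f \<in> ell2 UNIV"
    show "sl (V f) k \<in> ell2 UNIV" by (rule sl_ell2[OF bopD1[OF V f]])
    show "\<And>c. sl (V (\<lambda>x. c * f x)) k = (\<lambda>y. c * sl (V f) k y)" using f by (simp add: bopD_scale[OF V] sl_def)
    fix g :: "'x vec" assume g: "g \<in> ell2 UNIV"
    show "sl (V (\<lambda>x. f x + g x)) k = (\<lambda>y. sl (V f) k y + sl (V g) k y)" using f g by (simp add: bopD_add[OF V] sl_def)
  next
    show "\<exists>K. \<forall>f\<in>ell2 (UNIV::'x set). norm2 (sl (V f) k) \<le> K * norm2 f"
    proof (intro exI ballI)
      fix f :: "'x vec" assume f: "f \<in> ell2 UNIV"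
      show "norm2 (sl (V f) k) \<le> C * norm2 f"
        by (rule order_trans[OF sl_single_bound[OF bopD1[OF V f]] C(2)[OF f]])
    qed
  next
    fix f :: "'x vec" assume "f \<notin> ell2 UNIV" thus "sl (V f) k = (\<lambda>_. 0)" by (simp add: bopD_off[OF V] sl_def)
  qed
qed

lemma sl_amp: "F \<in> ell2 (UNIV \<times> J) \<Longrightarrow> sl (amp J a F) k = (if k \<in> J then a (sl F k) else (\<lambda>_. 0))"
  by (auto simp: amp_def sl_def)

lemma amp_ell2:
  assumes a: "bop UNIV UNIV a" and F: "F \<in> ell2 (UNIV \<times> J)"
  shows "amp J a F \<in> ell2 (UNIV \<times> J)"
proof -
  obtain C where C: "C \<ge> 0" "\<And>f. f \<in> ell2 UNIV \<Longrightarrow> norm2 (a f) \<le> C * norm2 f" using bop_bound[OF a] by blast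
  have sl: "\<And>k. sl (amp J a F) k \<in> ell2 UNIV" by (simp add: sl_amp[OF F] bopD1[OF a sl_ell2[OF F]])
  have cmp: "(norm2 (sl (amp J a F) k))^2 \<le> C^2 * (norm2 (sl F k))^2" for k
  proof (cases "k \<in> J")
    case True
    have "(norm2 (a (sl F k)))^2 \<le> (C * norm2 (sl F k))^2"
      by (rule power_mono[OF C(2)[OF sl_ell2[OF F]]]) simp
    thus ?thesis using True by (simp add: sl_amp[OF F] power_mult_distrib)
  qed (simp add: sl_amp[OF F])
  have s: "(\<lambda>k. (norm2 (sl (amp J a F) k))^2) summable_on UNIV"
    by (rule summable_on_comparison_test[OF summable_on_cmult_right[OF sl_norm_summable[OF F]]]) (use cmp in auto)
  have out: "\<And>x k. k \<notin> J \<Longrightarrow> amp J a F (x, k) = 0" using F by (simp add: amp_def)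
  show ?thesis by (rule ell2_from_sl(1)[OF sl s out])
qed

lemma amp_inj: fixes a :: "('x,'x) op" assumes j: "j \<in> J" and a: "bop UNIV UNIV a" shows "amp J a \<circ> inj j = inj j \<circ> a"
proof (rule ext)
  fix g :: "'x vec"
  show "(amp J a \<circ> inj j) g = (inj j \<circ> a) g"
  proof (cases "g \<in> ell2 UNIV")
    case True
    have "inj j g \<in> ell2 (UNIV \<times> J)" by (rule inj_ell2(1)[OF j True])
    then show ?thesis using True j bop_zero[OF a] bopD1[OF a True]
      by (auto simp: amp_def inj_def fun_eq_iff sl_def)
  next
    case False
    then show ?thesis using bop_zero[OF a] bopD_off[OF a False]
      by (auto simp: amp_def inj_def fun_eq_iff)
  qed
qed

lemma comm_comp: assumes y: "y \<in> commutant UNIV A" and y': "y' \<in> commutant UNIV A"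
  shows "y \<circ> y' \<in> commutant UNIV A"
proof -
  have b: "bop UNIV UNIV (y \<circ> y')" using y y' by (auto simp: commutant_def Bop_iff intro: bop_comp)
  have "y \<circ> y' \<circ> a = a \<circ> (y \<circ> y')" if a: "a \<in> A" for a
  proof -
    have c1: "y' \<circ> a = a \<circ> y'" and c2: "y \<circ> a = a \<circ> y" using y y' a by (auto simp: commutant_def)
    have "y \<circ> y' \<circ> a = y \<circ> (y' \<circ> a)" by (rule comp_assoc)
    also have "\<dots> = (y \<circ> a) \<circ> y'" by (simp only: c1 comp_assoc)
    also have "\<dots> = a \<circ> (y \<circ> y')" by (simp only: c2 comp_assoc)
    finally show ?thesis .
  qed
  thus ?thesis using b by (simp add: commutant_def Bop_iff)
qed

lemma comm_conj:
  fixes U :: "('x \<times> nat, 'x) op" and V :: "('x, 'x \<times> nat) op"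
  assumes U: "bop (UNIV \<times> J) UNIV U" and V: "bop UNIV (UNIV \<times> J) V" and VU: "V \<circ> U = idop (UNIV \<times> J)"
    and endo: "\<And>a. a \<in> \<A> \<Longrightarrow> U \<circ> amp J a \<circ> V \<in> \<A>" and AB: "\<A> \<subseteq> Bop UNIV"
    and y: "y \<in> commutant UNIV \<A>" and j: "j \<in> J" and k: "k \<in> J"
  shows "vv V k \<circ> y \<circ> (U \<circ> inj j) \<in> commutant UNIV \<A>"
proof -
  have yb: "bop UNIV UNIV y" using y by (simp add: commutant_def Bop_iff)
  have bop': "bop UNIV UNIV (vv V k \<circ> y \<circ> (U \<circ> inj j))"
    by (rule bop_comp[OF bop_comp[OF bop_inj[OF j] U] bop_comp[OF yb bop_vv[OF V]]])
  have "vv V k \<circ> y \<circ> (U \<circ> inj j) \<circ> a = a \<circ> (vv V k \<circ> y \<circ> (U \<circ> inj j))" if a: "a \<in> \<A>" for a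
  proof -
    have ab: "bop UNIV UNIV a" using a AB by (auto simp: Bop_iff)
    define b where "b = U \<circ> amp J a \<circ> V"
    have bA: "b \<in> \<A>" unfolding b_def by (rule endo[OF a])
    have e1: "b \<circ> (U \<circ> inj j) = U \<circ> inj j \<circ> a"
    proof -
      have "b \<circ> (U \<circ> inj j) = U \<circ> amp J a \<circ> (V \<circ> U) \<circ> inj j" by (simp add: b_def o_assoc)
      also have "\<dots> = U \<circ> amp J a \<circ> (idop (UNIV \<times> J) \<circ> inj j)" by (simp add: VU o_assoc)
      also have "idop (UNIV \<times> J) \<circ> inj j = inj j" by (rule idop_comp[OF bop_inj[OF j]])
      also have "U \<circ> amp J a \<circ> inj j = U \<circ> (amp J a \<circ> inj j)" by (simp add: o_assoc)
      also have "\<dots> = U \<circ> inj j \<circ> a" by (simp add: amp_inj[OF j ab] o_assoc)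
      finally show ?thesis .
    qed
    have e2: "vv V k \<circ> b = a \<circ> vv V k"
    proof (rule ext)
      fix g :: "'x vec"
      have Vg: "V g \<in> ell2 (UNIV \<times> J)" by (rule bop_ell2[OF V])
      have am: "amp J a (V g) \<in> ell2 (UNIV \<times> J)" by (rule amp_ell2[OF ab Vg])
      have "(vv V k \<circ> b) g = sl ((V \<circ> U) (amp J a (V g))) k" by (simp add: vv_def b_def)
      also have "\<dots> = sl (amp J a (V g)) k" by (simp add: VU idop_def am)
      also have "\<dots> = a (sl (V g) k)" by (simp add: sl_amp[OF Vg] k)
      finally show "(vv V k \<circ> b) g = (a \<circ> vv V k) g" by (simp add: vv_def)
    qed
    have yc: "y \<circ> b = b \<circ> y" using y bA by (simp add: commutant_def)
    have "vv V k \<circ> y \<circ> (U \<circ> inj j) \<circ> a = vv V k \<circ> y \<circ> (U \<circ> inj j \<circ> a)" by (simp add: o_assoc)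
    also have "\<dots> = vv V k \<circ> (y \<circ> b) \<circ> (U \<circ> inj j)" by (simp add: e1[symmetric] o_assoc)
    also have "\<dots> = (vv V k \<circ> b) \<circ> y \<circ> (U \<circ> inj j)" by (simp add: yc o_assoc)
    also have "\<dots> = a \<circ> (vv V k \<circ> y \<circ> (U \<circ> inj j))" by (simp add: e2 o_assoc)
    finally show ?thesis .
  qed
  thus ?thesis using bop' by (simp add: commutant_def Bop_iff)
qed

definition QQ :: "nat set \<Rightarrow> nat set \<Rightarrow> ('x \<times> nat, 'x \<times> nat) op" where
  "QQ J F = (\<lambda>H. if H \<in> ell2 (UNIV \<times> J) then (\<lambda>p. if snd p \<in> F then H p else 0) else (\<lambda>_. 0))"

lemma QQ_ell2: assumes H: "H \<in> ell2 (UNIV \<times> J)" shows "QQ J F H \<in> ell2 (UNIV \<times> J)"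
  by (simp add: QQ_def H) (rule ell2_mono[OF H], auto simp: ell2_out[OF H])

lemma QQ_norm: "H \<in> ell2 (UNIV \<times> J) \<Longrightarrow> norm2 (QQ J F H) \<le> norm2 H"
  by (rule norm2_mono[OF _ QQ_ell2]) (auto simp: QQ_def)

lemma bop_QQ: "bop (UNIV \<times> J) (UNIV \<times> J) (QQ J F :: ('x \<times> nat, 'x \<times> nat) op)"
  unfolding bop_def
proof (intro conjI ballI allI impI)
  fix f :: "('x \<times> nat) vec" assume f: "f \<in> ell2 (UNIV \<times> J)"
  show "QQ J F f \<in> ell2 (UNIV \<times> J)" by (rule QQ_ell2[OF f])
  show "\<And>c. QQ J F (\<lambda>x. c * f x) = (\<lambda>y. c * QQ J F f y)" using f by (auto simp: QQ_def ell2_scale)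
  fix g :: "('x \<times> nat) vec" assume g: "g \<in> ell2 (UNIV \<times> J)"
  show "QQ J F (\<lambda>x. f x + g x) = (\<lambda>y. QQ J F f y + QQ J F g y)" using f g by (auto simp: QQ_def ell2_add)
next
  show "\<exists>C. \<forall>f\<in>ell2 ((UNIV::'x set) \<times> J). norm2 (QQ J F f) \<le> C * norm2 f"
    using QQ_norm by (intro exI[of _ 1]) auto
next
  fix f :: "('x \<times> nat) vec" assume "f \<notin> ell2 (UNIV \<times> J)" thus "QQ J F f = (\<lambda>_. 0)" by (simp add: QQ_def)
qed

definition Dop :: "('x \<times> nat, 'x) op \<Rightarrow> ('x, 'x \<times> nat) op \<Rightarrow> ('x,'x) op \<Rightarrow> nat set \<Rightarrow> nat set \<Rightarrow> ('x,'x) op" where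
  "Dop U V z J F = U \<circ> QQ J F \<circ> V \<circ> z"

lemma bop_Dop: "bop (UNIV \<times> J) UNIV U \<Longrightarrow> bop UNIV (UNIV \<times> J) V \<Longrightarrow> bop UNIV UNIV z \<Longrightarrow> bop UNIV UNIV (Dop U V z J F)"
  unfolding Dop_def by (rule bop_comp[OF _ bop_comp[OF _ bop_comp[OF bop_QQ]]])

lemma Dop_empty: "bop (UNIV \<times> J) UNIV U \<Longrightarrow> Dop U V z J {} = ozero"
  by (rule ext) (simp add: Dop_def QQ_def ozero_def bop_zero)

lemma Dop_insert:
  assumes U: "bop (UNIV \<times> J) UNIV U" and V: "bop UNIV (UNIV \<times> J) V" and k: "k \<in> J" "k \<notin> F"
  shows "Dop U V z J (insert k F) = oadd ((U \<circ> inj k) \<circ> (vv V k \<circ> z)) (Dop U V z J F)"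
proof (rule ext)
  fix g
  let ?H = "V (z g)"
  have H: "?H \<in> ell2 (UNIV \<times> J)" by (rule bop_ell2[OF V])
  have e: "QQ J (insert k F) ?H = (\<lambda>p. QQ J {k} ?H p + QQ J F ?H p)"
    using H k by (auto simp: QQ_def fun_eq_iff)
  have s: "QQ J {k} ?H = inj k (sl ?H k)"
    using H k sl_ell2[OF H] by (auto simp: QQ_def inj_def sl_def fun_eq_iff)
  have "Dop U V z J (insert k F) g = U (\<lambda>p. QQ J {k} ?H p + QQ J F ?H p)" by (simp add: Dop_def e)
  also have "\<dots> = (\<lambda>x. U (QQ J {k} ?H) x + U (QQ J F ?H) x)"
    by (rule bopD_add[OF U QQ_ell2[OF H] QQ_ell2[OF H]])
  finally show "Dop U V z J (insert k F) g = oadd ((U \<circ> inj k) \<circ> (vv V k \<circ> z)) (Dop U V z J F) g"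
    by (simp add: oadd_def s vv_def Dop_def)
qed

lemma Dop_weak:
  fixes U :: "('x \<times> nat, 'x) op" and V :: "('x, 'x \<times> nat) op"
  assumes U: "bop (UNIV \<times> J) UNIV U" and V: "bop UNIV (UNIV \<times> J) V" and z: "bop UNIV UNIV z"
    and UV: "U \<circ> V = idop UNIV" and f: "f \<in> ell2 UNIV" and h: "h \<in> ell2 UNIV"
  shows "(\<lambda>m. ip f (Dop U V z J (J \<inter> {..<m}) h)) \<longlonglongrightarrow> ip f (z h)"
proof -
  define Fa where "Fa = adjop (UNIV \<times> J) UNIV U f"
  define H where "H = V (z h)"
  have Fa: "Fa \<in> ell2 (UNIV \<times> J)" unfolding Fa_def by (rule bopD1[OF bop_adjop[OF U] f])
  have H: "H \<in> ell2 (UNIV \<times> J)" unfolding H_def by (rule bop_ell2[OF V])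
  have e: "ip f (Dop U V z J F h) = infsum (\<lambda>p. cnj (Fa p) * (if snd p \<in> F then H p else 0)) UNIV" for F
  proof -
    have "ip f (Dop U V z J F h) = ip f (U (QQ J F H))" by (simp add: Dop_def H_def)
    also have "\<dots> = ip Fa (QQ J F H)" unfolding Fa_def by (rule adj_ip[OF U f QQ_ell2[OF H]])
    finally show ?thesis using H by (simp add: ip_def QQ_def)
  qed
  have lim: "ip Fa H = ip f (z h)"
  proof -
    have "ip Fa H = ip f (U H)" unfolding Fa_def by (rule adj_ip[OF U f H, symmetric])
    also have "U H = (U \<circ> V) (z h)" by (simp add: H_def)
    also have "\<dots> = z h" by (simp add: UV idop_def bop_ell2[OF z])
    finally show ?thesis .
  qed
  have "(\<lambda>m. infsum (\<lambda>p. cnj (Fa p) * (if snd p \<in> J \<inter> {..<m} then H p else 0)) UNIV) \<longlonglongrightarrow> infsum (\<lambda>p. cnj (Fa p) * H p) UNIV"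
  proof (rule infsum_dominated[OF ip_abs_summable[OF Fa H]])
    show "\<And>m p. cmod (cnj (Fa p) * (if snd p \<in> J \<inter> {..<m} then H p else 0)) \<le> cmod (Fa p) * cmod (H p)"
      by (auto simp: norm_mult)
    fix p :: "'x \<times> nat"
    show "(\<lambda>m. cnj (Fa p) * (if snd p \<in> J \<inter> {..<m} then H p else 0)) \<longlonglongrightarrow> cnj (Fa p) * H p"
    proof (rule tendsto_eventually)
      show "eventually (\<lambda>m. cnj (Fa p) * (if snd p \<in> J \<inter> {..<m} then H p else 0) = cnj (Fa p) * H p) sequentially"
        unfolding eventually_sequentially
      proof (intro exI[of _ "Suc (snd p)"] allI impI)
        fix m assume "Suc (snd p) \<le> m"
        thus "cnj (Fa p) * (if snd p \<in> J \<inter> {..<m} then H p else 0) = cnj (Fa p) * H p"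
          using ell2_out[OF H, of p] by (cases p) auto
      qed
    qed
  qed
  thus ?thesis unfolding e using lim by (simp add: ip_def)
qed

lemma Dop_bound:
  fixes U :: "('x \<times> nat, 'x) op" and V :: "('x, 'x \<times> nat) op"
  assumes U: "bop (UNIV \<times> J) UNIV U" and V: "bop UNIV (UNIV \<times> J) V" and z: "bop UNIV UNIV z"
  obtains M where "M \<ge> 0" "\<And>F f h. f \<in> ell2 UNIV \<Longrightarrow> h \<in> ell2 UNIV \<Longrightarrow>
     cmod (ip f (Dop U V z J F h)) \<le> M * ((norm2 f)^2 + (norm2 h)^2)"
proof -
  obtain CU where CU: "CU \<ge> 0" "\<And>f. f \<in> ell2 (UNIV \<times> J) \<Longrightarrow> norm2 (U f) \<le> CU * norm2 f" using bop_bound[OF U] by blast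
  obtain CV where CV: "CV \<ge> 0" "\<And>f. f \<in> ell2 UNIV \<Longrightarrow> norm2 (V f) \<le> CV * norm2 f" using bop_bound[OF V] by blast
  obtain Cz where Cz: "Cz \<ge> 0" "\<And>f. f \<in> ell2 UNIV \<Longrightarrow> norm2 (z f) \<le> Cz * norm2 f" using bop_bound[OF z] by blast
  define M where "M = CU^2 + (CV * Cz)^2"
  show ?thesis
  proof (rule that[of M])
    show "M \<ge> 0" by (simp add: M_def)
    fix F and f h :: "'x vec" assume f: "f \<in> ell2 UNIV" and h: "h \<in> ell2 UNIV"
    define Fa where "Fa = adjop (UNIV \<times> J) UNIV U f"
    define H where "H = V (z h)"
    have Fa: "Fa \<in> ell2 (UNIV \<times> J)" unfolding Fa_def by (rule bopD1[OF bop_adjop[OF U] f])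
    have H: "H \<in> ell2 (UNIV \<times> J)" unfolding H_def by (rule bop_ell2[OF V])
    have nFa: "norm2 Fa \<le> CU * norm2 f" unfolding Fa_def by (rule adj_ell2(2)[OF U CU f])
    have nH: "norm2 H \<le> CV * Cz * norm2 h"
    proof -
      have "norm2 H \<le> CV * norm2 (z h)" unfolding H_def by (rule CV(2)[OF bopD1[OF z h]])
      also have "\<dots> \<le> CV * (Cz * norm2 h)" by (rule mult_left_mono[OF Cz(2)[OF h] CV(1)])
      finally show ?thesis by (simp add: mult.assoc)
    qed
    have nQ: "norm2 (QQ J F H) \<le> CV * Cz * norm2 h" by (rule order_trans[OF QQ_norm[OF H] nH])
    have "ip f (Dop U V z J F h) = ip Fa (QQ J F H)"
      unfolding Fa_def H_def Dop_def o_def by (rule adj_ip[OF U f QQ_ell2[OF bop_ell2[OF V]]])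
    hence "cmod (ip f (Dop U V z J F h)) \<le> (1/2) * ((norm2 Fa)^2 + (norm2 (QQ J F H))^2)"
      using ip_bound[OF Fa QQ_ell2[OF H]] by simp
    also have "\<dots> \<le> (1/2) * ((CU * norm2 f)^2 + (CV * Cz * norm2 h)^2)"
      by (intro mult_left_mono add_mono power_mono nFa nQ) auto
    also have "\<dots> \<le> M * ((norm2 f)^2 + (norm2 h)^2)"
    proof -
      have a1: "(CU * norm2 f)^2 \<le> M * (norm2 f)^2"
        by (simp add: M_def power_mult_distrib mult_right_mono)
      have a2: "(CV * Cz * norm2 h)^2 \<le> M * (norm2 h)^2"
        by (simp add: M_def power_mult_distrib mult_right_mono)
      have "0 \<le> M * ((norm2 f)^2 + (norm2 h)^2)" by (simp add: M_def)
      thus ?thesis using a1 a2 by (simp add: algebra_simps)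
    qed
    finally show "cmod (ip f (Dop U V z J F h)) \<le> M * ((norm2 f)^2 + (norm2 h)^2)" .
  qed
qed

lemma Dlim:
  fixes U :: "('x \<times> nat, 'x) op" and V :: "('x, 'x \<times> nat) op"
  assumes U: "bop (UNIV \<times> J) UNIV U" and V: "bop UNIV (UNIV \<times> J) V" and z: "bop UNIV UNIV z"
    and UV: "U \<circ> V = idop UNIV" and g: "goodsh d \<sigma>"
    and X: "X \<in> Bop (UNIV \<times> words d)" and R: "R \<in> Bop (UNIV \<times> words d)"
    and L: "closedin (wstar (UNIV \<times> words d)) L"
    and mem: "\<And>m. X \<circ> tensg d \<sigma> (Dop U V z J (J \<inter> {..<m})) \<circ> R \<in> L"
  shows "X \<circ> tensg d \<sigma> z \<circ> R \<in> L"
proof -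
  have Db: "\<And>m. bop UNIV UNIV (Dop U V z J (J \<inter> {..<m}))" by (rule bop_Dop[OF U V z])
  have Xb: "bop (UNIV \<times> words d) (UNIV \<times> words d) X" and Rb: "bop (UNIV \<times> words d) (UNIV \<times> words d) R"
    using X R by (auto simp: Bop_iff)
  have inB: "X \<circ> tensg d \<sigma> a \<circ> R \<in> Bop (UNIV \<times> words d)" if "bop UNIV UNIV a" for a
    unfolding Bop_iff by (rule bop_comp[OF Rb bop_comp[OF bop_tensg[OF g that] Xb]])
  obtain M where M: "M \<ge> 0" "\<And>F f h. f \<in> ell2 UNIV \<Longrightarrow> h \<in> ell2 UNIV \<Longrightarrow>
     cmod (ip f (Dop U V z J F h)) \<le> M * ((norm2 f)^2 + (norm2 h)^2)"
    using Dop_bound[OF U V z] by blast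
  have "X \<circ> tensg d \<sigma> z \<circ> R \<in> wstar (UNIV \<times> words d) closure_of L"
  proof (rule wclosure_seq[OF inB[OF z] mem inB[OF Db]])
    fix \<xi> \<eta> :: "nat \<Rightarrow> ('x \<times> nat list) vec" assume np: "normal_pair (UNIV \<times> words d) \<xi> \<eta>"
    define \<xi>' where "\<xi>' = (\<lambda>k. adjop (UNIV \<times> words d) (UNIV \<times> words d) X (\<xi> k))"
    define \<eta>' where "\<eta>' = (\<lambda>k. R (\<eta> k))"
    have np1: "normal_pair (UNIV \<times> words d) \<xi> \<eta>'" unfolding \<eta>'_def by (rule normal_pair_right[OF np Rb])
    have np2: "normal_pair (UNIV \<times> words d) \<xi>' \<eta>'"
      unfolding \<xi>'_def by (rule normal_pair_left[OF np1 bop_adjop[OF Xb]])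
    have eq: "nfun \<xi> \<eta> (X \<circ> tensg d \<sigma> a \<circ> R) = nfun \<xi>' \<eta>' (tensg d \<sigma> a)" if a: "bop UNIV UNIV a" for a
    proof -
      have "nfun \<xi> \<eta> (X \<circ> tensg d \<sigma> a \<circ> R) = nfun \<xi> \<eta>' (X \<circ> tensg d \<sigma> a)"
        unfolding \<eta>'_def by (rule nfun_comp_right)
      also have "\<dots> = nfun \<xi>' \<eta>' (tensg d \<sigma> a)"
        unfolding \<xi>'_def by (rule nfun_comp_left[OF np1 Xb bop_tensg[OF g a]])
      finally show ?thesis .
    qed
    show "(\<lambda>m. nfun \<xi> \<eta> (X \<circ> tensg d \<sigma> (Dop U V z J (J \<inter> {..<m})) \<circ> R)) \<longlonglongrightarrow> nfun \<xi> \<eta> (X \<circ> tensg d \<sigma> z \<circ> R)"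
      unfolding eq[OF Db] eq[OF z]
      by (rule tensg_weak[OF g np2 Db z Dop_weak[OF U V z UV] M(1) M(2)])
  qed
  thus ?thesis using L by (simp add: closure_of_closedin)
qed

lemma tensg_ozero: "tensg d \<sigma> ozero = ozero"
  by (auto simp: tensg_def ozero_def fun_eq_iff)

definition Xw :: "enat \<Rightarrow> (nat \<Rightarrow> nat list \<Rightarrow> nat list) \<Rightarrow> (nat \<Rightarrow> ('x \<times> nat, 'x) op) \<Rightarrow> (nat \<times> nat) list
    \<Rightarrow> ('x \<times> nat list, 'x \<times> nat list) op" where
  "Xw d sh U ws = foldr (\<lambda>(i,j) T. tensg d (sh i) (entry U i j) \<circ> T) ws (idop (UNIV \<times> words d))"

lemma Xw_Nil: "Xw d sh U [] = idop (UNIV \<times> words d)" by (simp add: Xw_def)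
lemma Xw_Cons: "Xw d sh U ((i,j) # ws) = tensg d (sh i) (entry U i j) \<circ> Xw d sh U ws" by (simp add: Xw_def)

lemma Nwords_Cons: "(i,j) # ws \<in> Nwords d n \<longleftrightarrow> i \<in> idx d \<and> j \<in> idx (n i) \<and> ws \<in> Nwords d n"
  by (simp add: Nwords_def)
lemma Nwords_snoc: "ws \<in> Nwords d n \<Longrightarrow> i \<in> idx d \<Longrightarrow> k \<in> idx (n i) \<Longrightarrow> ws @ [(i,k)] \<in> Nwords d n"
  by (simp add: Nwords_def)

lemma bop_entry: "bop (UNIV \<times> idx (n i)) UNIV (U i) \<Longrightarrow> j \<in> idx (n i) \<Longrightarrow> bop UNIV UNIV (entry U i j)"
  unfolding entry_def by (rule bop_comp[OF bop_inj])

lemma bop_Xw: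
  fixes U :: "nat \<Rightarrow> ('x \<times> nat, 'x) op"
  assumes U_bop: "\<forall>i \<in> idx d. bop (UNIV \<times> idx (n i)) UNIV (U i)" and sh: "\<forall>i\<in>idx d. goodsh d (sh i)"
  shows "ws \<in> Nwords d n \<Longrightarrow> bop (UNIV \<times> words d) (UNIV \<times> words d) (Xw d sh U ws)"
proof (induction ws)
  case Nil
  then show ?case by (simp add: Xw_Nil bop_idop)
next
  case (Cons p ws)
  obtain i j where p: "p = (i,j)" by force
  have h: "i \<in> idx d" "j \<in> idx (n i)" "ws \<in> Nwords d n" using Cons(2) p Nwords_Cons by auto
  have Ui: "bop (UNIV \<times> idx (n i)) UNIV (U i)" using U_bop h(1) by blast
  have si: "goodsh d (sh i)" using sh h(1) by blast
  show ?case unfolding p Xw_Cons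
    by (rule bop_comp[OF Cons(1)[OF h(3)] bop_tensg[OF si bop_entry[of n i U j, OF Ui h(2)]]])
qed

lemma Xw_snoc:
  fixes U :: "nat \<Rightarrow> ('x \<times> nat, 'x) op"
  assumes t: "bop (UNIV \<times> words d) (UNIV \<times> words d) (tensg d (sh i) (entry U i k))"
  shows "Xw d sh U (ws @ [(i,k)]) = Xw d sh U ws \<circ> tensg d (sh i) (entry U i k)"
proof (induction ws)
  case Nil
  then show ?case by (simp add: Xw_Cons Xw_Nil comp_idop[OF t] idop_comp[OF t])
next
  case (Cons p ws)
  obtain a b where p: "p = (a,b)" by force
  show ?case unfolding p by (simp add: Xw_Cons Cons o_assoc)
qed

lemma ospan_prod:
  assumes GB: "G \<subseteq> Bop A" and lin: "linsp A L" and gh: "\<And>g h. g \<in> G \<Longrightarrow> h \<in> G \<Longrightarrow> g \<circ> h \<in> L"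
    and a: "a \<in> ospan G" and b: "b \<in> ospan G"
  shows "a \<circ> b \<in> L"
proof -
  have SB: "ospan G \<subseteq> Bop A" using linsp_ospan[OF GB] by (simp add: linsp_def)
  have L: "ozero \<in> L" "\<And>x y. x \<in> L \<Longrightarrow> y \<in> L \<Longrightarrow> oadd x y \<in> L" "\<And>c x. x \<in> L \<Longrightarrow> oscale c x \<in> L"
    using lin by (auto simp: linsp_def)
  have gb: "g \<circ> b \<in> L" if g: "g \<in> G" and b: "b \<in> ospan G" for g b
    using b
  proof induction
    case ospan_zero
    have "bop A A g" using g GB by (auto simp: Bop_iff)
    then show ?case using L(1) by (simp add: comp_ozero)
  next
    case (ospan_step S T c)
    have gb: "bop A A g" using g GB by (auto simp: Bop_iff)
    have Sb: "bop A A S" and Tb: "bop A A T" using ospan_step(1) ospan_step(2) SB GB by (auto simp: Bop_iff)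
    have "g \<circ> oadd (oscale c T) S = oadd (oscale c (g \<circ> T)) (g \<circ> S)"
      by (simp add: comp_oadd_right[OF gb bop_oscale[OF Tb] Sb] comp_oscale_right[OF gb Tb])
    show ?case unfolding \<open>g \<circ> oadd (oscale c T) S = _\<close>
      by (rule L(2)[OF L(3)[OF gh[OF g ospan_step.hyps(2)]] ospan_step.IH])
  qed
  show ?thesis
    using a
  proof induction
    case ospan_zero
    then show ?case using L(1) by (simp add: ozero_comp)
  next
    case (ospan_step S T c)
    have "oadd (oscale c T) S \<circ> b = oadd (oscale c (T \<circ> b)) (S \<circ> b)"
      by (simp add: oadd_comp oscale_comp)
    show ?case unfolding \<open>oadd (oscale c T) S \<circ> b = _\<close>
      by (rule L(2)[OF L(3)[OF gb[OF ospan_step.hyps(2) b]] ospan_step.IH])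
  qed
qed

lemma bop_rho: "bop UNIV UNIV y \<Longrightarrow> bop (UNIV \<times> words d) (UNIV \<times> words d) (rho d y)"
  unfolding rho_tensg by (rule bop_tensg[OF goodsh_id])

lemma main_generic:
  fixes \<A> :: "('x,'x) op set"
    and U :: "nat \<Rightarrow> ('x \<times> nat, 'x) op"
    and V :: "nat \<Rightarrow> ('x, 'x \<times> nat) op"
  assumes AB: "\<A> \<subseteq> Bop UNIV"
    and U_bop: "\<forall>i \<in> idx d. bop (UNIV \<times> idx (n i)) UNIV (U i)"
    and V_bop: "\<forall>i \<in> idx d. bop UNIV (UNIV \<times> idx (n i)) (V i)"
    and VU: "\<forall>i \<in> idx d. V i \<circ> U i = idop (UNIV \<times> idx (n i))"
    and UV: "\<forall>i \<in> idx d. U i \<circ> V i = idop UNIV"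
    and endo: "\<forall>i \<in> idx d. \<forall>a\<in>\<A>. alpha n U V i a \<in> \<A>"
    and sh: "\<forall>i\<in>idx d. goodsh d (sh i)"
  shows "wspan (UNIV \<times> words d) {Xw d sh U ws \<circ> rho d y | ws y. ws \<in> Nwords d n \<and> y \<in> commutant UNIV \<A>}
       = walg (UNIV \<times> words d) {Xw d sh U ws \<circ> rho d y | ws y. ws \<in> Nwords d n \<and> y \<in> commutant UNIV \<A>}"
proof -
  let ?W = "(UNIV :: 'x set) \<times> words d"
  define G where "G = {Xw d sh U ws \<circ> rho d y | ws y. ws \<in> Nwords d n \<and> y \<in> commutant UNIV \<A>}"
  define L where "L = wstar ?W closure_of ospan G"
  have yB: "\<And>y. y \<in> commutant UNIV \<A> \<Longrightarrow> bop UNIV UNIV y" by (simp add: commutant_def Bop_iff)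
  have XB: "\<And>ws. ws \<in> Nwords d n \<Longrightarrow> bop ?W ?W (Xw d sh U ws)" by (rule bop_Xw[OF U_bop sh])
  have GB: "G \<subseteq> Bop ?W"
    unfolding G_def by (auto simp: Bop_iff intro!: bop_comp[OF bop_rho[OF yB] XB])
  have SB: "ospan G \<subseteq> Bop ?W" using linsp_ospan[OF GB] by (simp add: linsp_def)
  have lin: "linsp ?W L" unfolding L_def by (rule closure_linsp[OF linsp_ospan[OF GB]])
  have Lc: "closedin (wstar ?W) L" unfolding L_def by simp
  have GL: "G \<subseteq> L"
    using closure_of_subset[of "ospan G" "wstar ?W"] SB gen_in_ospan unfolding L_def by (auto simp: topspace_wstar)
  have L0: "ozero \<in> L" and Ladd: "\<And>a b. a \<in> L \<Longrightarrow> b \<in> L \<Longrightarrow> oadd a b \<in> L"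
    using lin by (auto simp: linsp_def)
  have claim0: "\<forall>ws y. ws \<in> Nwords d n \<longrightarrow> y \<in> commutant UNIV \<A> \<longrightarrow> Xw d sh U ws \<circ> rho d y \<circ> Xw d sh U ws' \<circ> rho d y' \<in> L"
    if ws': "ws' \<in> Nwords d n" and y': "y' \<in> commutant UNIV \<A>" for ws' y'
    using ws'
  proof (induction ws')
    case Nil
    show ?case proof (intro allI impI)
    fix ws y assume ws: "ws \<in> Nwords d n" and y: "y \<in> commutant UNIV \<A>"
    have "Xw d sh U ws \<circ> rho d y \<circ> Xw d sh U [] \<circ> rho d y' = Xw d sh U ws \<circ> (tensg d id y \<circ> tensg d id y')"
    proof -
      have ti: "idop ?W \<circ> tensg d id y' = tensg d id y'"
        using idop_comp[OF bop_rho[OF yB[OF y']]] by (simp add: rho_tensg)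
      show ?thesis by (simp add: Xw_Nil rho_tensg o_assoc[symmetric] ti)
    qed
    also have "\<dots> = Xw d sh U ws \<circ> rho d (y \<circ> y')"
      by (simp add: tensg_comp[OF goodsh_id goodsh_id yB[OF y] yB[OF y']] rho_tensg)
    also have "\<dots> \<in> G" unfolding G_def using ws comm_comp[OF y y'] by blast
    finally show "Xw d sh U ws \<circ> rho d y \<circ> Xw d sh U [] \<circ> rho d y' \<in> L" using GL by blast
    qed
  next
    case (Cons p rest)
    obtain i j where p: "p = (i,j)" by force
    have h: "i \<in> idx d" "j \<in> idx (n i)" "rest \<in> Nwords d n" using Cons.prems p Nwords_Cons by auto
    define J where "J = idx (n i)"
    have Ub: "bop (UNIV \<times> J) UNIV (U i)" using U_bop h(1) J_def by blast
    have Vb: "bop UNIV (UNIV \<times> J) (V i)" using V_bop h(1) J_def by blast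
    have VUi: "V i \<circ> U i = idop (UNIV \<times> J)" using VU h(1) J_def by blast
    have UVi: "U i \<circ> V i = idop UNIV" using UV h(1) by blast
    have g: "goodsh d (sh i)" using sh h(1) by blast
    have endoi: "\<And>a. a \<in> \<A> \<Longrightarrow> U i \<circ> amp J a \<circ> V i \<in> \<A>" using endo h(1) by (simp add: alpha_def J_def)
    have ub: "\<And>k. k \<in> J \<Longrightarrow> bop UNIV UNIV (entry U i k)"
      using bop_entry[of n i U] Ub J_def by blast
    show ?case proof (intro allI impI)
    fix ws y assume ws: "ws \<in> Nwords d n" and y: "y \<in> commutant UNIV \<A>"
    define z where "z = y \<circ> entry U i j"
    define X where "X = Xw d sh U ws"
    define R where "R = Xw d sh U rest \<circ> rho d y'"
    have jJ: "j \<in> J" using h(2) J_def by simp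
    have zb: "bop UNIV UNIV z" unfolding z_def by (rule bop_comp[OF ub[OF jJ] yB[OF y]])
    have Xb: "bop ?W ?W X" unfolding X_def by (rule XB[OF ws])
    have Rb: "bop ?W ?W R" unfolding R_def by (rule bop_comp[OF bop_rho[OF yB[OF y']] XB[OF h(3)]])
    have eq1: "Xw d sh U ws \<circ> rho d y \<circ> Xw d sh U (p # rest) \<circ> rho d y' = X \<circ> (tensg d id y \<circ> tensg d (sh i) (entry U i j)) \<circ> R"
      by (simp add: p Xw_Cons X_def R_def rho_tensg o_assoc)
    also have "\<dots> = X \<circ> tensg d (sh i) z \<circ> R"
      by (simp add: tensg_comp[OF goodsh_id g yB[OF y] ub[OF jJ]] z_def)
    finally have eq: "Xw d sh U ws \<circ> rho d y \<circ> Xw d sh U (p # rest) \<circ> rho d y' = X \<circ> tensg d (sh i) z \<circ> R" .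
    have fin: "X \<circ> tensg d (sh i) (Dop (U i) (V i) z J F) \<circ> R \<in> L" if F: "finite F" "F \<subseteq> J" for F
      using F
    proof (induction F rule: finite_induct)
      case empty
      then show ?case
        by (simp add: Dop_empty[OF Ub] tensg_ozero comp_ozero[OF Xb] ozero_comp L0)
    next
      case (insert k F)
      have kJ: "k \<in> J" using insert by simp
      define yk where "yk = vv (V i) k \<circ> z"
      have ykA: "yk \<in> commutant UNIV \<A>"
      proof -
        have "yk = vv (V i) k \<circ> y \<circ> (U i \<circ> inj j)" by (simp add: yk_def z_def entry_def o_assoc)
        thus ?thesis using comm_conj[OF Ub Vb VUi endoi AB y jJ kJ] by simp
      qed
      have ykb: "bop UNIV UNIV yk" by (rule yB[OF ykA])
      have Db: "bop UNIV UNIV (Dop (U i) (V i) z J F)" by (rule bop_Dop[OF Ub Vb zb])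
      have ukb: "bop UNIV UNIV (entry U i k)" by (rule ub[OF kJ])
      have t1b: "bop ?W ?W (tensg d (sh i) (entry U i k \<circ> yk))"
        by (rule bop_tensg[OF g bop_comp[OF ykb ukb]])
      have t2b: "bop ?W ?W (tensg d (sh i) (Dop (U i) (V i) z J F))" by (rule bop_tensg[OF g Db])
      have dec: "Dop (U i) (V i) z J (insert k F) = oadd (entry U i k \<circ> yk) (Dop (U i) (V i) z J F)"
        unfolding Dop_insert[OF Ub Vb kJ insert(2)] yk_def entry_def ..
      have e2: "X \<circ> tensg d (sh i) (Dop (U i) (V i) z J (insert k F)) \<circ> R
          = oadd (X \<circ> tensg d (sh i) (entry U i k \<circ> yk) \<circ> R) (X \<circ> tensg d (sh i) (Dop (U i) (V i) z J F) \<circ> R)"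
        unfolding dec tensg_oadd comp_oadd_right[OF Xb t1b t2b] oadd_comp ..
      have tk: "bop ?W ?W (tensg d (sh i) (entry U i k))" by (rule bop_tensg[OF g ukb])
      have e3: "X \<circ> tensg d (sh i) (entry U i k \<circ> yk) \<circ> R = Xw d sh U (ws @ [(i,k)]) \<circ> rho d yk \<circ> Xw d sh U rest \<circ> rho d y'"
      proof -
        have "tensg d (sh i) (entry U i k \<circ> yk) = tensg d (sh i) (entry U i k) \<circ> tensg d id yk"
          using tensg_comp[OF g goodsh_id ukb ykb] by simp
        thus ?thesis by (simp add: X_def R_def Xw_snoc[of d sh i U k, OF tk] rho_tensg o_assoc)
      qed
      have m1: "X \<circ> tensg d (sh i) (entry U i k \<circ> yk) \<circ> R \<in> L"
        unfolding e3 using Cons.IH[OF h(3)] Nwords_snoc[OF ws h(1), of k] ykA kJ J_def by blast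
      have FJ: "F \<subseteq> J" using insert.prems by simp
      show ?case unfolding e2 by (rule Ladd[OF m1 insert.IH[OF FJ]])
    qed
    have mem: "X \<circ> tensg d (sh i) (Dop (U i) (V i) z J (J \<inter> {..<m})) \<circ> R \<in> L" for m
      by (rule fin) auto
    show "Xw d sh U ws \<circ> rho d y \<circ> Xw d sh U (p # rest) \<circ> rho d y' \<in> L"
      unfolding eq
      by (rule Dlim[OF Ub Vb zb UVi g _ _ Lc mem]) (use Xb Rb in \<open>auto simp: Bop_iff\<close>)
    qed
  qed
  have claim: "Xw d sh U ws \<circ> rho d y \<circ> Xw d sh U ws' \<circ> rho d y' \<in> L"
    if "ws' \<in> Nwords d n" "y' \<in> commutant UNIV \<A>" "ws \<in> Nwords d n" "y \<in> commutant UNIV \<A>" for ws' y' ws y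
    using claim0[OF that(1,2)] that(3,4) by blast
  have gh: "a \<circ> b \<in> L" if a: "a \<in> G" and b: "b \<in> G" for a b
  proof -
    obtain ws y where a': "a = Xw d sh U ws \<circ> rho d y" "ws \<in> Nwords d n" "y \<in> commutant UNIV \<A>" using a G_def by blast
    obtain ws' y' where b': "b = Xw d sh U ws' \<circ> rho d y'" "ws' \<in> Nwords d n" "y' \<in> commutant UNIV \<A>" using b G_def by blast
    have "a \<circ> b = Xw d sh U ws \<circ> rho d y \<circ> Xw d sh U ws' \<circ> rho d y'" by (simp add: a'(1) b'(1) o_assoc)
    thus ?thesis using claim[OF b'(2) b'(3) a'(2) a'(3)] by simp
  qed
  have "wspan ?W G = walg ?W G"
  proof (rule wspan_eq_walg[OF GB])
    fix a b assume "a \<in> ospan G" "b \<in> ospan G"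
    thus "a \<circ> b \<in> wspan ?W G" using ospan_prod[OF GB lin gh] unfolding L_def wspan_def by blast
  qed
  thus ?thesis unfolding G_def .
qed

theorem proposition3p9:
  fixes \<A> :: "('x,'x) op set"
    and d :: enat
    and n :: "nat \<Rightarrow> enat"
    and U :: "nat \<Rightarrow> ('x \<times> nat, 'x) op"
    and V :: "nat \<Rightarrow> ('x, 'x \<times> nat) op"
  assumes d_pos: "d \<ge> 1"
    and n_pos: "\<forall>i \<in> idx d. n i \<ge> 1"
    and alg: "unital_wstar_alg UNIV \<A>"
    and U_bop: "\<forall>i \<in> idx d. bop (UNIV \<times> idx (n i)) UNIV (U i)"
    and V_bop: "\<forall>i \<in> idx d. bop UNIV (UNIV \<times> idx (n i)) (V i)"
    and VU: "\<forall>i \<in> idx d. V i \<circ> U i = idop (UNIV \<times> idx (n i))"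
    and UV: "\<forall>i \<in> idx d. U i \<circ> V i = idop UNIV"
    and endo: "\<forall>i \<in> idx d. unital_endo \<A> (alpha n U V i)"
    and wcont: "\<forall>i \<in> idx d. wstar_continuous \<A> (alpha n U V i)"
    and cb: "\<forall>i \<in> idx d. completely_bounded \<A> (alpha n U V i)"
    and sup_bound: "\<exists>C. \<forall>\<mu> \<in> words d. \<forall>a \<in> \<A>.
                      opnorm UNIV (alpha_word n U V \<mu> a) \<le> C * opnorm UNIV a"
  shows "wspan (UNIV \<times> words d)
           {Vw d U ws \<circ> rho d y | ws y. ws \<in> Nwords d n \<and> y \<in> commutant UNIV \<A>}
         = walg (UNIV \<times> words d)
           {Vw d U ws \<circ> rho d y | ws y. ws \<in> Nwords d n \<and> y \<in> commutant UNIV \<A>}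
       \<and> wspan (UNIV \<times> words d)
           {Ww d U ws \<circ> rho d y | ws y. ws \<in> Nwords d n \<and> y \<in> commutant UNIV \<A>}
         = walg (UNIV \<times> words d)
           {Ww d U ws \<circ> rho d y | ws y. ws \<in> Nwords d n \<and> y \<in> commutant UNIV \<A>}"
proof -
  have AB: "\<A> \<subseteq> Bop UNIV" using alg by (simp add: unital_wstar_alg_def subalg_def)
  have endo': "\<forall>i\<in>idx d. \<forall>a\<in>\<A>. alpha n U V i a \<in> \<A>" using endo by (simp add: unital_endo_def)
  have shV: "\<forall>i\<in>idx d. goodsh d ((\<lambda>i. (#) i) i)" by (simp add: goodsh_Cons)
  have shW: "\<forall>i\<in>idx d. goodsh d ((\<lambda>i w. w @ [i]) i)" by (simp add: goodsh_snoc)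
  have Veq: "\<And>ws. Vw d U ws = Xw d (\<lambda>i. (#) i) U ws" by (simp add: Vw_def Xw_def tensl_tensg)
  have Weq: "\<And>ws. Ww d U ws = Xw d (\<lambda>i w. w @ [i]) U ws" by (simp add: Ww_def Xw_def tensr_tensg)
  show ?thesis
    using main_generic[OF AB U_bop V_bop VU UV endo' shV] main_generic[OF AB U_bop V_bop VU UV endo' shW]
    by (simp add: Veq Weq)
qed

end
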